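(* There is an absolute constant $C>0$ such that the following holds. Let $N=2^n$ be a power of two, let ${\cal H}$ be the discrete bivariate Haar transform on $\mathbb{C}^{N\times N}$, and let ${\cal A}:\mathbb{C}^{N\times N}\to\mathbb{C}^m$ be a linear map such that ${\cal A}{\cal H}^{-1}:\mathbb{C}^{N\times N}\to\mathbb{C}^m$ has the restricted isometry property of order $Cs\log^3(N)$ and level $\delta<1/3$. Then for any $\mathbf{X}\in\mathbb{C}^{N\times N}$, if noisy measurements $\mathbf{y}={\cal A}(\mathbf{X})+\boldsymbol{\xi}$ are observed with $\|\boldsymbol{\xi}\|_2\le\varepsilon$, then $$\hat{\mathbf{X}} = \operatorname{argmin}_{\mathbf{Z}}\|\mathbf{Z}\|_{TV}\quad\text{such that}\quad\|{\cal A}(\mathbf{Z})-\mathbf{y}\|_2\le\varepsilon$$ satisfies $$\|\mathbf{X}-\hat{\mathbf{X}}\|_2\lesssim\frac{\|\nabla\mathbf{X}-(\nabla\mathbf{X})_s\|_1}{\sqrt{s}}+\varepsilon.$$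
   Context: Notation: $u\lesssim v$ means $u\le C'v$ for an absolute constant $C'>0$. $\|\cdot\|_p$ is the entrywise $\ell_p$ norm of an array; inner product $\langle\mathbf{X},\mathbf{Y}\rangle=\mathrm{tr}(\mathbf{X}\mathbf{Y}^* )$. A linear map ${\cal A}$ from arrays to $\mathbb{C}^m$ has the restricted isometry property of order $s$ and level $\delta$ if $(1-\delta)\|\mathbf{X}\|_2^2\le\|{\cal A}(\mathbf{X})\|_2^2\le(1+\delta)\|\mathbf{X}\|_2^2$ for all arrays with at most $s$ nonzero entries. Discrete gradient: $(\mathbf{X}_x)_{j,k}=X_{j+1,k}-X_{j,k}$, $(\mathbf{X}_y)_{j,k}=X_{j,k+1}-X_{j,k}$; $\nabla\mathbf{X}\in\mathbb{C}^{N\times N\times2}$ with $[\nabla\mathbf{X}]_{j,k}=((\mathbf{X}_x)_{j,k},(\mathbf{X}_y)_{j,k})$, an undefined component being set to $0$ (first component when $j=N$, second when $k=N$). $\|\mathbf{X}\|_{TV}=\|\nabla\mathbf{X}\|_1$. $(\nabla\mathbf{X})_s$ is the best $s$-sparse approximation of $\nabla\mathbf{X}$ (its $s$ largest-magnitude entries). Haar transform: $H^0=\mathbf{1}_{[0,1)}$, $H^1=\mathbf{1}_{[0,1/2)}-\mathbf{1}_{[1/2,1)}$; for $e=(e_1,e_2)\in\{(0,1),(1,0),(1,1)\}$, $H^e(u,v)=H^{e_1}(u)H^{e_2}(v)$, $H^e_{j,k}(x)=2^jH^e(2^jx-k)$, $j\ge0$, $k\in\mathbb{Z}^2\cap2^j[0,1)^2$.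 Identifying $\mathbf{X}\in\mathbb{C}^{N\times N}$ with the function equal to $NX_{j,k}$ on $[\frac{j-1}{N},\frac jN)\times[\frac{k-1}{N},\frac kN)$, the constant function and $\{H^e_{j,k}:j\le n-1\}$ give an orthonormal basis $\{\mathbf{h}\}$ of $\mathbb{C}^{N\times N}$; ${\cal H}(\mathbf{X})$ is the $N\times N$ array of coefficients $\langle\mathbf{X},\mathbf{h}\rangle$. *)

theory Defs
  imports "HOL-Analysis.Analysis"
begin

text \<open>Arrays in C^{N x N} are functions nat \<times> nat \<Rightarrow> complex, indexed 0-based by
  the grid {0..<N} \<times> {0..<N}; values outside the grid are irrelevant/zero.
  Vectors in C^m are functions nat \<Rightarrow> complex, indexed by {0..<m}.\<close>

type_synonym arr = "nat \<times> nat \<Rightarrow> complex"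

definition grid :: "nat \<Rightarrow> (nat \<times> nat) set" where
  "grid N = {0..<N} \<times> {0..<N}"

definition is_array :: "nat \<Rightarrow> arr \<Rightarrow> bool" where
  "is_array N X \<longleftrightarrow> (\<forall>p. p \<notin> grid N \<longrightarrow> X p = 0)"

definition arr_norm2 :: "nat \<Rightarrow> arr \<Rightarrow> real" where
  "arr_norm2 N X = sqrt (\<Sum>p\<in>grid N. (cmod (X p))\<^sup>2)"

definition vec_norm2 :: "nat \<Rightarrow> (nat \<Rightarrow> complex) \<Rightarrow> real" where
  "vec_norm2 m v = sqrt (\<Sum>i<m. (cmod (v i))\<^sup>2)"

definition linear_meas :: "nat \<Rightarrow> nat \<Rightarrow> (arr \<Rightarrow> (nat \<Rightarrow> complex)) \<Rightarrow> bool" where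
  "linear_meas N m A \<longleftrightarrow>
     (\<forall>X. is_array N X \<longrightarrow> (\<forall>i. i \<ge> m \<longrightarrow> A X i = 0)) \<and>
     (\<forall>X Y. is_array N X \<longrightarrow> is_array N Y \<longrightarrow> A (\<lambda>p. X p + Y p) = (\<lambda>i. A X i + A Y i)) \<and>
     (\<forall>c X. is_array N X \<longrightarrow> A (\<lambda>p. c * X p) = (\<lambda>i. c * A X i))"

definition grad :: "nat \<Rightarrow> arr \<Rightarrow> (nat \<times> nat \<times> nat \<Rightarrow> complex)" where
  "grad N X = (\<lambda>(j,k,c).
      if c = 0 then (if j + 1 < N then X (j+1,k) - X (j,k) else 0)
      else (if k + 1 < N then X (j,k+1) - X (j,k) else 0))"

definition grad_index :: "nat \<Rightarrow> (nat \<times> nat \<times> nat) set" where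
  "grad_index N = {0..<N} \<times> {0..<N} \<times> {0..<2}"

definition tv_norm :: "nat \<Rightarrow> arr \<Rightarrow> real" where
  "tv_norm N X = (\<Sum>q\<in>grad_index N. cmod (grad N X q))"

text \<open>l1 error of the best s-sparse approximation of the gradient:
  \<parallel>\<nabla>X - (\<nabla>X)_s\<parallel>_1, i.e. the l1 mass outside the s largest-magnitude entries,
  which equals the minimum over index sets S of size at most s of the l1 mass outside S.\<close>
definition grad_tail :: "nat \<Rightarrow> nat \<Rightarrow> arr \<Rightarrow> real" where
  "grad_tail N s X = Min ((\<lambda>S. \<Sum>q\<in>grad_index N - S. cmod (grad N X q)) `
                          {S. S \<subseteq> grad_index N \<and> card S \<le> s})"

definition haar0 :: "real \<Rightarrow> real" where
  "haar0 t = (if 0 \<le> t \<and> t < 1 then 1 else 0)"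

definition haar1 :: "real \<Rightarrow> real" where
  "haar1 t = (if 0 \<le> t \<and> t < 1/2 then 1 else if 1/2 \<le> t \<and> t < 1 then -1 else 0)"

definition haar1d :: "nat \<Rightarrow> real \<Rightarrow> real" where
  "haar1d e t = (if e = 0 then haar0 t else haar1 t)"

definition haar_fun :: "nat \<times> nat \<Rightarrow> nat \<Rightarrow> nat \<times> nat \<Rightarrow> real \<times> real \<Rightarrow> real" where
  "haar_fun e j k x = 2^j * haar1d (fst e) (2^j * fst x - real (fst k))
                          * haar1d (snd e) (2^j * snd x - real (snd k))"

text \<open>Index set of the Haar basis of C^{N x N}, N = 2^n: None is the constant function,
  Some (e, j, k) is H^e_{j,k} with j \<le> n-1 and k \<in> Z^2 \<inter> 2^j [0,1)^2.\<close>
definition haar_index :: "nat \<Rightarrow> ((nat \<times> nat) \<times> nat \<times> (nat \<times> nat)) option set" where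
  "haar_index n = {None} \<union> Some ` {(e, j, k). e \<in> {(0,1),(1,0),(1,1)} \<and> j < n \<and>
                                      fst k < 2^j \<and> snd k < 2^j}"

text \<open>The array identified with a (piecewise constant) function f on [0,1)^2: X is identified
  with the function equal to N X_{a,b} on the cell [a/N,(a+1)/N) \<times> [b/N,(b+1)/N) (0-based),
  so the array of f has entry f(a/N, b/N) / N (all Haar functions with j \<le> n-1 are constant
  on these cells).\<close>
definition fun_to_arr :: "nat \<Rightarrow> (real \<times> real \<Rightarrow> real) \<Rightarrow> arr" where
  "fun_to_arr N f = (\<lambda>(a,b). if (a,b) \<in> grid N
       then complex_of_real (f (real a / real N, real b / real N) / real N) else 0)"

definition haar_basis :: "nat \<Rightarrow> ((nat \<times> nat) \<times> nat \<times> (nat \<times> nat)) option \<Rightarrow> arr" where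
  "haar_basis n b = (case b of
      None \<Rightarrow> fun_to_arr (2^n) (\<lambda>x. 1)
    | Some (e, j, k) \<Rightarrow> fun_to_arr (2^n) (haar_fun e j k))"

definition arr_inner :: "nat \<Rightarrow> arr \<Rightarrow> arr \<Rightarrow> complex" where
  "arr_inner N X Y = (\<Sum>p\<in>grid N. X p * cnj (Y p))"

definition haar_transform :: "nat \<Rightarrow> arr \<Rightarrow> ((nat \<times> nat) \<times> nat \<times> (nat \<times> nat)) option \<Rightarrow> complex" where
  "haar_transform n X = (\<lambda>b. if b \<in> haar_index n then arr_inner (2^n) X (haar_basis n b) else 0)"

definition coef_norm2 :: "nat \<Rightarrow> (((nat \<times> nat) \<times> nat \<times> (nat \<times> nat)) option \<Rightarrow> complex) \<Rightarrow> real" where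
  "coef_norm2 n c = sqrt (\<Sum>b\<in>haar_index n. (cmod (c b))\<^sup>2)"

text \<open>A H^{-1} has the RIP of order t and level \<delta>: for every coefficient array c with at most t
  nonzero entries, (1-\<delta>)\<parallel>c\<parallel>^2 \<le> \<parallel>A(H^{-1} c)\<parallel>^2 \<le> (1+\<delta>)\<parallel>c\<parallel>^2. Since H is a bijection from
  arrays onto coefficient arrays, we quantify over Z = H^{-1} c.\<close>
definition rip_haar :: "nat \<Rightarrow> nat \<Rightarrow> (arr \<Rightarrow> (nat \<Rightarrow> complex)) \<Rightarrow> real \<Rightarrow> real \<Rightarrow> bool" where
  "rip_haar n m A t \<delta> \<longleftrightarrow>
     (\<forall>Z. is_array (2^n) Z \<longrightarrow>
        real (card {b\<in>haar_index n. haar_transform n Z b \<noteq> 0}) \<le> t \<longrightarrow>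
          (1 - \<delta>) * (coef_norm2 n (haar_transform n Z))\<^sup>2 \<le> (vec_norm2 m (A Z))\<^sup>2 \<and>
          (vec_norm2 m (A Z))\<^sup>2 \<le> (1 + \<delta>) * (coef_norm2 n (haar_transform n Z))\<^sup>2)"

end

theory Submission
  imports Defs
begin

definition hdv :: "nat \<Rightarrow> nat \<Rightarrow> nat \<Rightarrow> nat \<Rightarrow> real" where
  "hdv e d k a = (if a div 2^d = k then (if e = 0 then 1 else if a mod 2^d < 2^(d-1) then 1 else -1) else 0)"

lemma div_eq_iff_bounds:
  fixes a q k :: nat assumes "q > 0"
  shows "a div q = k \<longleftrightarrow> k * q \<le> a \<and> a < (k+1) * q"
proof -
  have "a div q = k \<longleftrightarrow> k \<le> a div q \<and> a div q < k + 1" by auto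
  also have "\<dots> \<longleftrightarrow> k * q \<le> a \<and> a < (k+1) * q"
    using less_eq_div_iff_mult_less_eq[OF assms] div_less_iff_less_mult[OF assms] by simp
  finally show ?thesis .
qed

lemma haar1d_disc:
  assumes "d \<ge> 1"
  shows "haar1d e (2^j * (real a / 2^(j+d)) - real k) = hdv e d k a"
proof -
  have eq: "2^j * (real a / 2^(j+d)) - real k = (real a - real k * 2^d) / 2^d"
    by (simp add: power_add field_simps)
  have p: "(0::real) < 2^d" by simp
  have A: "0 \<le> (real a - real k * 2^d) / 2^d \<and> (real a - real k * 2^d) / 2^d < 1 \<longleftrightarrow> a div 2^d = k"
  proof -
    have "0 \<le> (real a - real k * 2^d) / 2^d \<and> (real a - real k * 2^d) / 2^d < 1 \<longleftrightarrow>
          real k * 2^d \<le> real a \<and> real a < (real k + 1) * 2^d"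
      using p by (simp add: field_simps)
    also have "\<dots> \<longleftrightarrow> k * 2^d \<le> a \<and> a < (k+1) * 2^d"
    proof -
      have 1: "real k * 2^d = real (k * 2^d)" by simp
      have 2: "(real k + 1) * 2^d = real ((k+1) * 2^d)" by (simp add: algebra_simps)
      show ?thesis unfolding 1 2 of_nat_le_iff of_nat_less_iff ..
    qed
    also have "\<dots> \<longleftrightarrow> a div 2^d = k"
      using div_eq_iff_bounds[of "2^d" a k] by simp
    finally show ?thesis .
  qed
  have B: "a div 2^d = k \<Longrightarrow> ((real a - real k * 2^d) / 2^d < 1/2 \<longleftrightarrow> a mod 2^d < 2^(d-1))"
  proof -
    assume h: "a div 2^d = k"
    have am: "a = k * 2^d + a mod 2^d" using h div_mult_mod_eq[of a "2^d"] by simp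
    have d2: "(2::real)^d = 2 * 2^(d-1)" using assms by (cases d) auto
    have "(real a - real k * 2^d) / 2^d = real (a mod 2^d) / 2^d"
      by (subst am) simp
    also have "\<dots> < 1/2 \<longleftrightarrow> real (a mod 2^d) < 2^(d-1)"
      unfolding d2 by (simp add: field_simps)
    also have "\<dots> \<longleftrightarrow> a mod 2^d < 2^(d-1)"
    proof -
      have "(2::real)^(d-1) = real (2^(d-1))" by simp
      then show ?thesis by (simp only: of_nat_less_iff)
    qed
    finally show ?thesis .
  qed
  define t where "t = (real a - real k * 2^d) / 2^d"
  have A': "0 \<le> t \<and> t < 1 \<longleftrightarrow> a div 2^d = k" using A t_def by simp
  have B': "a div 2^d = k \<Longrightarrow> (t < 1/2 \<longleftrightarrow> a mod 2^d < 2^(d-1))" using B t_def by simp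
  have "haar1d e t = hdv e d k a"
  proof (cases "a div 2^d = k")
    case True
    then show ?thesis using A' B' unfolding haar1d_def haar0_def haar1_def hdv_def by auto
  next
    case False
    then have "\<not> (0 \<le> t \<and> t < 1)" using A' by simp
    then show ?thesis using False unfolding haar1d_def haar0_def haar1_def hdv_def by auto
  qed
  then show ?thesis using eq t_def by simp
qed

type_synonym hidx = "((nat \<times> nat) \<times> nat \<times> (nat \<times> nat)) option"

definition hbv :: "nat \<Rightarrow> hidx \<Rightarrow> nat \<times> nat \<Rightarrow> real" where
  "hbv n b p = (case b of None \<Rightarrow> 1 / 2^n
     | Some (e, j, k) \<Rightarrow> 2^j * hdv (fst e) (n-j) (fst k) (fst p) * hdv (snd e) (n-j) (snd k) (snd p) / 2^n)"

definition coef :: "nat \<Rightarrow> arr \<Rightarrow> hidx \<Rightarrow> complex" where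
  "coef n W b = (\<Sum>p\<in>grid (2^n). W p * of_real (hbv n b p))"

lemma haar_index_Some: "Some (e, j, k) \<in> haar_index n \<longleftrightarrow>
   e \<in> {(0,1),(1,0),(1,1)} \<and> j < n \<and> fst k < 2^j \<and> snd k < 2^j"
  unfolding haar_index_def by auto

lemma haar_basis_eq:
  assumes "b \<in> haar_index n"
  shows "haar_basis n b p = (if p \<in> grid (2^n) then of_real (hbv n b p) else 0)"
proof (cases b)
  case None
  then show ?thesis unfolding haar_basis_def fun_to_arr_def hbv_def
    by (cases p) simp
next
  case (Some x)
  then obtain e j k where x: "b = Some (e, j, k)" by (cases x) auto
  then have jn: "j < n" using assms haar_index_Some by auto
  obtain a c where p: "p = (a, c)" by (cases p)
  have nj: "n = j + (n - j)" using jn by simp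
  have d: "n - j \<ge> 1" using jn by simp
  have h1: "haar1d (fst e) (2^j * (real a / 2^n) - real (fst k)) = hdv (fst e) (n-j) (fst k) a"
    using haar1d_disc[OF d, of "fst e" j a "fst k"] nj by simp
  have h2: "haar1d (snd e) (2^j * (real c / 2^n) - real (snd k)) = hdv (snd e) (n-j) (snd k) c"
    using haar1d_disc[OF d, of "snd e" j c "snd k"] nj by simp
  show ?thesis unfolding x p haar_basis_def fun_to_arr_def hbv_def haar_fun_def
    using h1 h2 by simp
qed

lemma arr_inner_coef:
  assumes "b \<in> haar_index n"
  shows "arr_inner (2^n) W (haar_basis n b) = coef n W b"
  unfolding arr_inner_def coef_def using haar_basis_eq[OF assms]
  by (intro sum.cong) auto

lemma sum_even_odd: "(\<Sum>a<2*(M::nat). f a) = (\<Sum>a<M. f (2*a) + f (2*a+1))"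
  by (induction M) (auto simp: sum.distrib add_ac)

lemma sum_grid: "(\<Sum>p\<in>grid M. f p) = (\<Sum>a<M. \<Sum>c<M. f (a, c))"
  unfolding grid_def by (simp add: sum.cartesian_product atLeast0LessThan)

lemma sum_grid2: "(\<Sum>p\<in>grid (2*M). f p) = (\<Sum>q\<in>grid M.
   f (2 * fst q, 2 * snd q) + f (2 * fst q, 2 * snd q+1) + f (2 * fst q+1, 2 * snd q) + f (2 * fst q+1, 2 * snd q+1))"
  unfolding sum_grid by (simp add: sum_even_odd sum.distrib add_ac)

lemma hd_lift:
  assumes "d \<ge> 1" "r < 2"
  shows "hdv e (d+1) k (2*a+r) = hdv e d k a"
proof -
  have 1: "(2*a+r) div 2^(d+1) = a div 2^d"
  proof -
    have "(2*a+r) div 2 = a" using assms by auto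
    then show ?thesis using div_mult2_eq[of "2*a+r" 2 "2^d"] by simp
  qed
  have 2: "(2*a+r) mod 2^(d+1) = 2 * (a mod 2^d) + r"
    using assms mod_mult2_eq[of "2*a+r" 2 "2^d"] by (simp add: mult.commute)
  have 3: "(2::nat)^d = 2 * 2^(d-1)" using assms by (cases d) auto
  have 4: "2 * (a mod 2^d) + r < 2^(d+1-1) \<longleftrightarrow> a mod 2^d < 2^(d-1)"
    using assms 3 by auto
  show ?thesis unfolding hdv_def 1 2 using 4 by simp
qed

definition sg :: "nat \<Rightarrow> nat \<Rightarrow> real" where
  "sg e r = (if e = 0 then 1 else if r = 0 then 1 else -1)"

lemma hd_one:
  assumes "r < 2"
  shows "hdv e 1 k (2*a+r) = (if a = k then sg e r else 0)"
  using assms unfolding hdv_def sg_def by auto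

lemma finite_grid[simp]: "finite (grid M)" unfolding grid_def by simp

lemma hbv_lift:
  assumes "b = None \<or> (\<exists>e j k. b = Some (e, j, k) \<and> j < n)" "r1 < 2" "r2 < 2"
  shows "hbv (Suc n) b (2*a+r1, 2*c+r2) = hbv n b (a, c) / 2"
  using assms(1)
proof
  assume "b = None" then show ?thesis unfolding hbv_def by simp
next
  assume "\<exists>e j k. b = Some (e, j, k) \<and> j < n"
  then obtain e j k where b: "b = Some (e, j, k)" and jn: "j < n" by auto
  have d: "n - j \<ge> 1" and s: "Suc n - j = (n - j) + 1" using jn by auto
  show ?thesis unfolding b hbv_def using hd_lift[OF d assms(2)] hd_lift[OF d assms(3)] s
    by simp
qed

lemma hbv_lift00: "b = None \<or> (\<exists>e j k. b = Some (e, j, k) \<and> j < n) \<Longrightarrow>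
  hbv (Suc n) b (2*a, 2*c) = hbv n b (a, c) / 2"
  using hbv_lift[of b n 0 0 a c] by simp
lemma hbv_lift01: "b = None \<or> (\<exists>e j k. b = Some (e, j, k) \<and> j < n) \<Longrightarrow>
  hbv (Suc n) b (2*a, 2*c+1) = hbv n b (a, c) / 2"
  using hbv_lift[of b n 0 1 a c] by simp
lemma hbv_lift10: "b = None \<or> (\<exists>e j k. b = Some (e, j, k) \<and> j < n) \<Longrightarrow>
  hbv (Suc n) b (2*a+1, 2*c) = hbv n b (a, c) / 2"
  using hbv_lift[of b n 1 0 a c] by simp
lemma hbv_lift11: "b = None \<or> (\<exists>e j k. b = Some (e, j, k) \<and> j < n) \<Longrightarrow>
  hbv (Suc n) b (2*a+1, 2*c+1) = hbv n b (a, c) / 2"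
  using hbv_lift[of b n 1 1 a c] by simp

lemma hbv_top:
  assumes "r1 < 2" "r2 < 2"
  shows "hbv (Suc n) (Some (e, n, k)) (2*a+r1, 2*c+r2) =
     (if (a, c) = k then sg (fst e) r1 * sg (snd e) r2 / 2 else 0)"
proof -
  have "hdv (fst e) 1 (fst k) (2*a+r1) = (if a = fst k then sg (fst e) r1 else 0)"
    using hd_one[OF assms(1)] .
  moreover have "hdv (snd e) 1 (snd k) (2*c+r2) = (if c = snd k then sg (snd e) r2 else 0)"
    using hd_one[OF assms(2)] .
  ultimately show ?thesis unfolding hbv_def by (cases k) auto
qed

definition coarse :: "arr \<Rightarrow> arr" where
  "coarse W q = (W (2 * fst q, 2 * snd q) + W (2 * fst q, 2 * snd q+1) + W (2 * fst q+1, 2 * snd q)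
                 + W (2 * fst q+1, 2 * snd q+1)) / 2"

lemma coef_lift:
  assumes "b = None \<or> (\<exists>e j k. b = Some (e, j, k) \<and> j < n)"
  shows "coef (Suc n) W b = coef n (coarse W) b"
proof -
  have "coef (Suc n) W b = (\<Sum>p\<in>grid (2*2^n). W p * of_real (hbv (Suc n) b p))"
    unfolding coef_def by simp
  also have "\<dots> = (\<Sum>q\<in>grid (2^n). coarse W q * of_real (hbv n b q))"
    unfolding sum_grid2 coarse_def
  proof (intro sum.cong refl)
    fix q :: "nat \<times> nat" obtain a c where q: "q = (a, c)" by (cases q)
    show "W (2 * fst q, 2 * snd q) * complex_of_real (hbv (Suc n) b (2 * fst q, 2 * snd q)) +
          W (2 * fst q, 2 * snd q + 1) * complex_of_real (hbv (Suc n) b (2 * fst q, 2 * snd q + 1)) +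
          W (2 * fst q + 1, 2 * snd q) * complex_of_real (hbv (Suc n) b (2 * fst q + 1, 2 * snd q)) +
          W (2 * fst q + 1, 2 * snd q + 1) * complex_of_real (hbv (Suc n) b (2 * fst q + 1, 2 * snd q + 1)) =
          (W (2 * fst q, 2 * snd q) + W (2 * fst q, 2 * snd q + 1) + W (2 * fst q + 1, 2 * snd q) +
           W (2 * fst q + 1, 2 * snd q + 1)) / 2 * complex_of_real (hbv n b q)"
      unfolding q fst_conv snd_conv
      unfolding hbv_lift00[OF assms] hbv_lift01[OF assms] hbv_lift10[OF assms] hbv_lift11[OF assms]
      by (simp add: field_simps)
  qed
  finally show ?thesis unfolding coef_def .
qed

lemma coef_top:
  assumes "k \<in> grid (2^n)"
  shows "coef (Suc n) W (Some (e, n, k)) =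
    (W (2 * fst k, 2 * snd k) * of_real (sg (fst e) 0 * sg (snd e) 0)
     + W (2 * fst k, 2 * snd k+1) * of_real (sg (fst e) 0 * sg (snd e) 1)
     + W (2 * fst k+1, 2 * snd k) * of_real (sg (fst e) 1 * sg (snd e) 0)
     + W (2 * fst k+1, 2 * snd k+1) * of_real (sg (fst e) 1 * sg (snd e) 1)) / 2"
proof -
  have t00: "hbv (Suc n) (Some (e, n, k)) (2*a, 2*c) = (if (a, c) = k then sg (fst e) 0 * sg (snd e) 0 / 2 else 0)" for a c
    using hbv_top[of 0 0 n e k a c] by simp
  have t01: "hbv (Suc n) (Some (e, n, k)) (2*a, 2*c+1) = (if (a, c) = k then sg (fst e) 0 * sg (snd e) 1 / 2 else 0)" for a c
    using hbv_top[of 0 1 n e k a c] by simp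
  have t10: "hbv (Suc n) (Some (e, n, k)) (2*a+1, 2*c) = (if (a, c) = k then sg (fst e) 1 * sg (snd e) 0 / 2 else 0)" for a c
    using hbv_top[of 1 0 n e k a c] by simp
  have t11: "hbv (Suc n) (Some (e, n, k)) (2*a+1, 2*c+1) = (if (a, c) = k then sg (fst e) 1 * sg (snd e) 1 / 2 else 0)" for a c
    using hbv_top[of 1 1 n e k a c] by simp
  have "coef (Suc n) W (Some (e, n, k)) = (\<Sum>p\<in>grid (2*2^n). W p * of_real (hbv (Suc n) (Some (e, n, k)) p))"
    unfolding coef_def by simp
  also have "\<dots> = (\<Sum>q\<in>grid (2^n). if q = k then
    (W (2 * fst k, 2 * snd k) * of_real (sg (fst e) 0 * sg (snd e) 0)
     + W (2 * fst k, 2 * snd k+1) * of_real (sg (fst e) 0 * sg (snd e) 1)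
     + W (2 * fst k+1, 2 * snd k) * of_real (sg (fst e) 1 * sg (snd e) 0)
     + W (2 * fst k+1, 2 * snd k+1) * of_real (sg (fst e) 1 * sg (snd e) 1)) / 2 else 0)"
    unfolding sum_grid2 t00 t01 t10 t11
    by (intro sum.cong) (auto simp: field_simps)
  finally show ?thesis using assms by (simp add: finite_grid)
qed

definition EE :: "(nat \<times> nat) set" where "EE = {(0,1),(1,0),(1,1)}"

lemma haar_index_0: "haar_index 0 = {None}"
  unfolding haar_index_def by auto

lemma haar_index_lift: "b \<in> haar_index n \<Longrightarrow> b = None \<or> (\<exists>e j k. b = Some (e, j, k) \<and> j < n)"
  unfolding haar_index_def by auto

lemma haar_index_Suc: "haar_index (Suc n) = haar_index n \<union> Some ` ((\<lambda>x. (fst x, n, snd x)) ` (EE \<times> grid (2^n)))"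
  unfolding haar_index_def EE_def grid_def by (auto simp: less_Suc_eq image_iff)

lemma finite_haar_index[simp]: "finite (haar_index n)"
proof (induction n)
  case 0 then show ?case by (simp add: haar_index_0)
next
  case (Suc n) then show ?case unfolding haar_index_Suc EE_def by simp
qed

lemma sum_haar_index_Suc:
  fixes F :: "hidx \<Rightarrow> 'a::comm_monoid_add"
  shows "(\<Sum>b\<in>haar_index (Suc n). F b) = (\<Sum>b\<in>haar_index n. F b) +
     (\<Sum>k\<in>grid (2^n). F (Some ((0,1), n, k)) + F (Some ((1,0), n, k)) + F (Some ((1,1), n, k)))"
proof -
  have disj: "haar_index n \<inter> Some ` ((\<lambda>x. (fst x, n, snd x)) ` (EE \<times> grid (2^n))) = {}"
    unfolding haar_index_def by auto
  have inj1: "inj_on Some X" for X :: "((nat \<times> nat) \<times> nat \<times> nat \<times> nat) set" by (simp add: inj_on_def)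
  have inj2: "inj_on (\<lambda>x. (fst x, n, snd x)) X" for X :: "((nat\<times>nat) \<times> nat\<times>nat) set" by (auto simp: inj_on_def prod_eq_iff)
  have "(\<Sum>b\<in>Some ` ((\<lambda>x. (fst x, n, snd x)) ` (EE \<times> grid (2^n))). F b)
      = (\<Sum>x\<in>EE \<times> grid (2^n). F (Some (fst x, n, snd x)))"
    by (simp add: sum.reindex[OF inj1] sum.reindex[OF inj2])
  also have "\<dots> = (\<Sum>e\<in>EE. \<Sum>k\<in>grid (2^n). F (Some (e, n, k)))"
    unfolding sum.cartesian_product by (simp add: case_prod_beta)
  also have "\<dots> = (\<Sum>k\<in>grid (2^n). \<Sum>e\<in>EE. F (Some (e, n, k)))"
    by (rule sum.swap)
  also have "\<dots> = (\<Sum>k\<in>grid (2^n). F (Some ((0,1), n, k)) + F (Some ((1,0), n, k)) + F (Some ((1,1), n, k)))"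
    unfolding EE_def by (simp add: add_ac)
  finally have *: "(\<Sum>b\<in>Some ` ((\<lambda>x. (fst x, n, snd x)) ` (EE \<times> grid (2^n))). F b) = \<dots>" .
  have fin: "finite (Some ` ((\<lambda>x. (fst x, n, snd x)) ` (EE \<times> grid (2^n))))"
    unfolding EE_def by simp
  show ?thesis unfolding haar_index_Suc sum.union_disjoint[OF finite_haar_index fin disj] * ..
qed

lemma four_id:
  fixes a b c d :: complex
  shows "(cmod ((a + b + c + d) / 2))^2 + (cmod ((a - b + c - d) / 2))^2 + (cmod ((a + b - c - d) / 2))^2
      + (cmod ((a - b - c + d) / 2))^2 = (cmod a)^2 + (cmod b)^2 + (cmod c)^2 + (cmod d)^2"
  unfolding cmod_power2 by (simp add: power2_eq_square field_simps)

lemma sg_simps[simp]: "sg 0 r = 1" "sg 1 0 = 1" "sg 1 1 = -1" "sg (Suc 0) 0 = 1" "sg (Suc 0) (Suc 0) = -1"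
  unfolding sg_def by auto

lemma parseval:
  "(\<Sum>p\<in>grid (2^n). (cmod (W p))^2) = (\<Sum>b\<in>haar_index n. (cmod (coef n W b))^2)"
proof (induction n arbitrary: W)
  case 0
  have g: "grid (Suc 0) = {(0,0)}" unfolding grid_def by auto
  show ?case by (simp add: haar_index_0 g coef_def hbv_def)
next
  case (Suc n)
  let ?g = "\<lambda>k. (W (2 * fst k, 2 * snd k), W (2 * fst k, 2 * snd k+1), W (2 * fst k+1, 2 * snd k), W (2 * fst k+1, 2 * snd k+1))"
  have "(\<Sum>b\<in>haar_index (Suc n). (cmod (coef (Suc n) W b))^2)
      = (\<Sum>b\<in>haar_index n. (cmod (coef n (coarse W) b))^2) +
        (\<Sum>k\<in>grid (2^n). (cmod (coef (Suc n) W (Some ((0,1), n, k))))^2 + (cmod (coef (Suc n) W (Some ((1,0), n, k))))^2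
           + (cmod (coef (Suc n) W (Some ((1,1), n, k))))^2)"
    unfolding sum_haar_index_Suc
    using coef_lift[OF haar_index_lift] by simp
  also have "\<dots> = (\<Sum>k\<in>grid (2^n). (cmod (coarse W k))^2 + ((cmod (coef (Suc n) W (Some ((0,1), n, k))))^2 + (cmod (coef (Suc n) W (Some ((1,0), n, k))))^2
           + (cmod (coef (Suc n) W (Some ((1,1), n, k))))^2))"
    unfolding Suc.IH[symmetric] by (simp add: sum.distrib)
  also have "\<dots> = (\<Sum>k\<in>grid (2^n). (cmod (W (2 * fst k, 2 * snd k)))^2 + (cmod (W (2 * fst k, 2 * snd k+1)))^2
       + (cmod (W (2 * fst k+1, 2 * snd k)))^2 + (cmod (W (2 * fst k+1, 2 * snd k+1)))^2)"
  proof (intro sum.cong refl)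
    fix k assume k: "k \<in> grid (2^n)"
    show "(cmod (coarse W k))^2 + ((cmod (coef (Suc n) W (Some ((0,1), n, k))))^2 + (cmod (coef (Suc n) W (Some ((1,0), n, k))))^2
           + (cmod (coef (Suc n) W (Some ((1,1), n, k))))^2) =
      (cmod (W (2 * fst k, 2 * snd k)))^2 + (cmod (W (2 * fst k, 2 * snd k+1)))^2
       + (cmod (W (2 * fst k+1, 2 * snd k)))^2 + (cmod (W (2 * fst k+1, 2 * snd k+1)))^2"
    proof -
      define a where "a = W (2 * fst k, 2 * snd k)"
      define b where "b = W (2 * fst k, 2 * snd k+1)"
      define c where "c = W (2 * fst k+1, 2 * snd k)"
      define d where "d = W (2 * fst k+1, 2 * snd k+1)"
      have c01: "coef (Suc n) W (Some ((0,1), n, k)) = (a - b + c - d) / 2"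
        unfolding coef_top[OF k] a_def b_def c_def d_def by simp
      have c10: "coef (Suc n) W (Some ((1,0), n, k)) = (a + b - c - d) / 2"
        unfolding coef_top[OF k] a_def b_def c_def d_def by simp
      have c11: "coef (Suc n) W (Some ((1,1), n, k)) = (a - b - c + d) / 2"
        unfolding coef_top[OF k] a_def b_def c_def d_def by simp
      have cw: "coarse W k = (a + b + c + d) / 2" unfolding coarse_def a_def b_def c_def d_def ..
      show ?thesis unfolding c01 c10 c11 cw a_def[symmetric] b_def[symmetric] c_def[symmetric] d_def[symmetric]
        using four_id[of a b c d] by (simp add: algebra_simps)
    qed
  qed
  also have "\<dots> = (\<Sum>p\<in>grid (2^Suc n). (cmod (W p))^2)"
    by (simp add: sum_grid2)
  finally show ?case by simp
qed

lemma hbv_norm: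
  "b \<in> haar_index n \<Longrightarrow> (\<Sum>p\<in>grid (2^n). (hbv n b p)^2) = 1"
proof (induction n arbitrary: b)
  case 0
  have g: "grid (Suc 0) = {(0,0)}" unfolding grid_def by auto
  show ?case using 0 by (simp add: haar_index_0 g hbv_def)
next
  case (Suc n)
  show ?case
  proof (cases "b \<in> haar_index n")
    case True
    have L: "b = None \<or> (\<exists>e j k. b = Some (e, j, k) \<and> j < n)" using haar_index_lift[OF True] .
    have "(\<Sum>p\<in>grid (2^Suc n). (hbv (Suc n) b p)^2) = (\<Sum>q\<in>grid (2^n). (hbv n b q)^2)"
      unfolding power_Suc sum_grid2 hbv_lift00[OF L] hbv_lift01[OF L] hbv_lift10[OF L] hbv_lift11[OF L]
      by (simp add: power2_eq_square)
    then show ?thesis using Suc.IH[OF True] by simp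
  next
    case False
    then obtain e k where b: "b = Some (e, n, k)" and e: "e \<in> EE" and k: "k \<in> grid (2^n)"
      using Suc.prems unfolding haar_index_Suc by auto
    have sq: "(sg x y)^2 = 1" for x y unfolding sg_def by auto
    have t: "hbv (Suc n) (Some (e, n, k)) (2*a+r1, 2*c+r2) ^ 2 = (if (a, c) = k then 1/4 else 0)"
      if "r1 < 2" "r2 < 2" for a c r1 r2
      unfolding hbv_top[OF that, of n e k a c] using sq[of "fst e" r1] sq[of "snd e" r2]
      by (cases "(a, c) = k") (simp_all add: power_mult_distrib power_divide)
    have t00: "hbv (Suc n) (Some (e, n, k)) (2*a, 2*c) ^ 2 = (if (a, c) = k then 1/4 else 0)" for a c
      using t[of 0 0 a c] by simp
    have t01: "hbv (Suc n) (Some (e, n, k)) (2*a, 2*c+1) ^ 2 = (if (a, c) = k then 1/4 else 0)" for a c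
      using t[of 0 1 a c] by simp
    have t10: "hbv (Suc n) (Some (e, n, k)) (2*a+1, 2*c) ^ 2 = (if (a, c) = k then 1/4 else 0)" for a c
      using t[of 1 0 a c] by simp
    have t11: "hbv (Suc n) (Some (e, n, k)) (2*a+1, 2*c+1) ^ 2 = (if (a, c) = k then 1/4 else 0)" for a c
      using t[of 1 1 a c] by simp
    have "(\<Sum>p\<in>grid (2^Suc n). (hbv (Suc n) b p)^2) = (\<Sum>q\<in>grid (2^n). if q = k then 1 else 0)"
      unfolding power_Suc sum_grid2 b
    proof (intro sum.cong refl)
      fix q :: "nat \<times> nat" obtain a c where q: "q = (a, c)" by (cases q)
      show "(hbv (Suc n) (Some (e, n, k)) (2 * fst q, 2 * snd q))\<^sup>2 +
        (hbv (Suc n) (Some (e, n, k)) (2 * fst q, 2 * snd q + 1))\<^sup>2 +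
        (hbv (Suc n) (Some (e, n, k)) (2 * fst q + 1, 2 * snd q))\<^sup>2 +
        (hbv (Suc n) (Some (e, n, k)) (2 * fst q + 1, 2 * snd q + 1))\<^sup>2 =
        (if q = k then 1 else 0)"
        unfolding q fst_conv snd_conv t00 t01 t10 t11 by simp
    qed
    also have "\<dots> = 1" using k by simp
    finally show ?thesis .
  qed
qed

definition hb :: "nat \<Rightarrow> hidx \<Rightarrow> arr" where
  "hb n b = (\<lambda>p. of_real (hbv n b p))"

lemma coef_hb_self: "a \<in> haar_index n \<Longrightarrow> coef n (hb n a) a = 1"
proof -
  assume a: "a \<in> haar_index n"
  have "coef n (hb n a) a = of_real (\<Sum>p\<in>grid (2^n). (hbv n a p)^2)"
    unfolding coef_def hb_def by (simp add: power2_eq_square)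
  then show ?thesis using hbv_norm[OF a] by simp
qed

lemma coef_hb_sym: "coef n (hb n a) b = coef n (hb n b) a"
  unfolding coef_def hb_def by (simp add: mult.commute)

lemma coef_hb:
  assumes a: "a \<in> haar_index n" and b: "b \<in> haar_index n"
  shows "coef n (hb n a) b = (if a = b then 1 else 0)"
proof (cases "a = b")
  case True then show ?thesis using coef_hb_self[OF a] by simp
next
  case False
  have "(\<Sum>p\<in>grid (2^n). (cmod (hb n a p))^2) = 1"
    using hbv_norm[OF a] unfolding hb_def by simp
  then have P: "(\<Sum>c\<in>haar_index n. (cmod (coef n (hb n a) c))^2) = 1" using parseval[of "hb n a" n] by simp
  have "(\<Sum>c\<in>haar_index n. (cmod (coef n (hb n a) c))^2) =
        (cmod (coef n (hb n a) a))^2 + (\<Sum>c\<in>haar_index n - {a}. (cmod (coef n (hb n a) c))^2)"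
    using a by (simp add: sum.remove)
  then have Z: "(\<Sum>c\<in>haar_index n - {a}. (cmod (coef n (hb n a) c))^2) = 0"
    using P coef_hb_self[OF a] by simp
  have "(cmod (coef n (hb n a) b))^2 = 0"
    using Z b False by (subst (asm) sum_nonneg_eq_0_iff) auto
  then show ?thesis using False by simp
qed

lemma coef_linear_sum:
  "coef n (\<lambda>p. \<Sum>b\<in>T. c b * f b p) a = (\<Sum>b\<in>T. c b * coef n (f b) a)"
proof -
  have "coef n (\<lambda>p. \<Sum>b\<in>T. c b * f b p) a = (\<Sum>p\<in>grid (2^n). \<Sum>b\<in>T. c b * (f b p * of_real (hbv n a p)))"
    unfolding coef_def sum_distrib_right by (simp add: mult.assoc)
  also have "\<dots> = (\<Sum>b\<in>T. \<Sum>p\<in>grid (2^n). c b * (f b p * of_real (hbv n a p)))"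
    by (rule sum.swap)
  also have "\<dots> = (\<Sum>b\<in>T. c b * coef n (f b) a)"
    unfolding coef_def sum_distrib_left ..
  finally show ?thesis .
qed

lemma coef_synth:
  assumes "T \<subseteq> haar_index n" "a \<in> haar_index n"
  shows "coef n (\<lambda>p. \<Sum>b\<in>T. c b * hb n b p) a = (if a \<in> T then c a else 0)"
proof -
  have fin: "finite T" using finite_subset[OF assms(1) finite_haar_index] .
  have "coef n (\<lambda>p. \<Sum>b\<in>T. c b * hb n b p) a = (\<Sum>b\<in>T. c b * coef n (hb n b) a)"
    by (rule coef_linear_sum)
  also have "\<dots> = (\<Sum>b\<in>T. if b = a then c b else 0)"
  proof (intro sum.cong refl)
    fix b assume "b \<in> T"
    then have "b \<in> haar_index n" using assms(1) by blast
    then show "c b * coef n (hb n b) a = (if b = a then c b else 0)"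
      using coef_hb[of b n a] assms(2) by simp
  qed
  also have "\<dots> = (if a \<in> T then c a else 0)" using fin by simp
  finally show ?thesis .
qed

lemma coef_diff: "coef n (\<lambda>p. X p - Y p) a = coef n X a - coef n Y a"
  unfolding coef_def by (simp add: sum_subtractf left_diff_distrib)

lemma synthesis:
  assumes p: "p \<in> grid (2^n)"
  shows "W p = (\<Sum>b\<in>haar_index n. coef n W b * hb n b p)"
proof -
  define R where "R = (\<lambda>p. W p - (\<Sum>b\<in>haar_index n. coef n W b * hb n b p))"
  have "coef n R a = 0" if "a \<in> haar_index n" for a
    unfolding R_def coef_diff coef_synth[OF order.refl that] using that by simp
  then have "(\<Sum>a\<in>haar_index n. (cmod (coef n R a))^2) = 0" by simp
  then have "(\<Sum>q\<in>grid (2^n). (cmod (R q))^2) = 0" using parseval[of R n] by simp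
  then have "(cmod (R p))^2 = 0" using p by (subst (asm) sum_nonneg_eq_0_iff) auto
  then show ?thesis unfolding R_def by simp
qed

lemma path1d:
  fixes f :: "nat \<Rightarrow> complex"
  assumes "x < L" "x0 < L"
  shows "cmod (f x - f x0) \<le> (\<Sum>t<L-1. cmod (f (Suc t) - f t))"
proof -
  have main: "cmod (f v - f u) \<le> (\<Sum>t<L-1. cmod (f (Suc t) - f t))" if "u \<le> v" "v < L" for u v
  proof -
    have "f v - f u = (\<Sum>t=u..<v. f (Suc t) - f t)"
      using sum_Suc_diff'[OF that(1), of f] by simp
    then have "cmod (f v - f u) \<le> (\<Sum>t=u..<v. cmod (f (Suc t) - f t))"
      by (simp add: norm_sum)
    also have "\<dots> \<le> (\<Sum>t<L-1. cmod (f (Suc t) - f t))"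
      using that by (intro sum_mono2) auto
    finally show ?thesis .
  qed
  show ?thesis
  proof (cases "x0 \<le> x")
    case True then show ?thesis using main assms by simp
  next
    case False
    then have "cmod (f x0 - f x) \<le> (\<Sum>t<L-1. cmod (f (Suc t) - f t))" using main assms by simp
    then show ?thesis by (simp add: norm_minus_commute)
  qed
qed

definition TVh :: "nat \<Rightarrow> arr \<Rightarrow> real" where
  "TVh L w = (\<Sum>y<L. \<Sum>t<L-1. cmod (w (Suc t, y) - w (t, y)))"
definition TVv :: "nat \<Rightarrow> arr \<Rightarrow> real" where
  "TVv L w = (\<Sum>x<L. \<Sum>t<L-1. cmod (w (x, Suc t) - w (x, t)))"

lemma poincare_sq:
  fixes w :: arr and g :: "nat \<times> nat \<Rightarrow> real"
  assumes g1: "\<And>x y. \<bar>g (x, y)\<bar> \<le> 1" and g0: "(\<Sum>x<L. \<Sum>y<L. g (x, y)) = 0"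
  shows "real L * real L * cmod (\<Sum>x<L. \<Sum>y<L. w (x, y) * of_real (g (x, y)))
         \<le> real L * real L * (real L * (TVh L w + TVv L w))"
proof -
  let ?S = "\<Sum>x<L. \<Sum>y<L. w (x, y) * of_real (g (x, y))"
  have shift: "?S = (\<Sum>x<L. \<Sum>y<L. (w (x, y) - w p0) * of_real (g (x, y)))" for p0
  proof -
    have "(\<Sum>x<L. \<Sum>y<L. (w (x, y) - w p0) * of_real (g (x, y))) =
          ?S - w p0 * of_real (\<Sum>x<L. \<Sum>y<L. g (x, y))"
      by (simp add: algebra_simps sum_subtractf sum_distrib_left)
    then show ?thesis using g0 by simp
  qed
  have "real L * real L * cmod ?S = cmod (\<Sum>x0<L. \<Sum>y0<L. ?S)"
    by (simp add: norm_mult)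
  also have "\<dots> = cmod (\<Sum>x0<L. \<Sum>y0<L. \<Sum>x<L. \<Sum>y<L. (w (x, y) - w (x0, y0)) * of_real (g (x, y)))"
    using shift by simp
  also have "\<dots> \<le> (\<Sum>x0<L. \<Sum>y0<L. \<Sum>x<L. \<Sum>y<L. cmod (w (x, y) - w (x0, y0)))"
  proof -
    have "cmod (\<Sum>x0<L. \<Sum>y0<L. \<Sum>x<L. \<Sum>y<L. (w (x, y) - w (x0, y0)) * of_real (g (x, y)))
       \<le> (\<Sum>x0<L. \<Sum>y0<L. \<Sum>x<L. \<Sum>y<L. cmod ((w (x, y) - w (x0, y0)) * of_real (g (x, y))))"
      by (rule order.trans[OF norm_sum sum_mono], rule order.trans[OF norm_sum sum_mono],
          rule order.trans[OF norm_sum sum_mono], rule norm_sum)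
    also have "\<dots> \<le> (\<Sum>x0<L. \<Sum>y0<L. \<Sum>x<L. \<Sum>y<L. cmod (w (x, y) - w (x0, y0)))"
    proof (intro sum_mono)
      fix x0 y0 x y
      have "cmod ((w (x, y) - w (x0, y0)) * of_real (g (x, y))) = cmod (w (x, y) - w (x0, y0)) * \<bar>g (x, y)\<bar>"
        by (simp add: norm_mult)
      also have "\<dots> \<le> cmod (w (x, y) - w (x0, y0))"
        using g1[of x y] by (simp add: mult_left_le)
      finally show "cmod ((w (x, y) - w (x0, y0)) * of_real (g (x, y))) \<le> cmod (w (x, y) - w (x0, y0))" .
    qed
    finally show ?thesis .
  qed
  also have "\<dots> \<le> (\<Sum>x0<L. \<Sum>y0<L. \<Sum>x<L. \<Sum>y<L.
      (\<Sum>t<L-1. cmod (w (x, Suc t) - w (x, t))) + (\<Sum>t<L-1. cmod (w (Suc t, y0) - w (t, y0))))"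
  proof (intro sum_mono)
    fix x0 y0 x y assume "x0 \<in> {..<L}" "y0 \<in> {..<L}" "x \<in> {..<L}" "y \<in> {..<L}"
    then have lt: "x0 < L" "y0 < L" "x < L" "y < L" by auto
    have "cmod (w (x, y) - w (x0, y0)) \<le> cmod (w (x, y) - w (x, y0)) + cmod (w (x, y0) - w (x0, y0))"
      by (rule order.trans[OF _ norm_triangle_ineq]) simp
    also have "\<dots> \<le> (\<Sum>t<L-1. cmod (w (x, Suc t) - w (x, t))) + (\<Sum>t<L-1. cmod (w (Suc t, y0) - w (t, y0)))"
      using path1d[of y L y0 "\<lambda>t. w (x, t)"] path1d[of x L x0 "\<lambda>t. w (t, y0)"] lt
      by (intro add_mono) auto
    finally show "cmod (w (x, y) - w (x0, y0)) \<le> \<dots>" .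
  qed
  also have "\<dots> = real L * real L * (real L * (TVh L w + TVv L w))"
    unfolding TVh_def TVv_def
    by (simp add: sum.distrib sum_distrib_left algebra_simps sum.swap[of _ "{..<L}" "{..<L}"])
  finally show ?thesis .
qed

lemma localize1:
  fixes F :: "nat \<Rightarrow> complex"
  assumes "(k+1) * 2^d \<le> M"
  shows "(\<Sum>a<M. F a * of_real (hdv e d k a)) = (\<Sum>x<(2::nat)^d. F (k * 2^d + x) * of_real (hdv e d 0 x))"
proof -
  let ?L = "(2::nat)^d"
  have sub: "{k*?L..<k*?L+?L} \<subseteq> {..<M}" using assms by (auto simp: algebra_simps)
  have zero: "\<forall>a\<in>{..<M} - {k*?L..<k*?L+?L}. F a * of_real (hdv e d k a) = 0"
  proof
    fix a assume "a \<in> {..<M} - {k*?L..<k*?L+?L}"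
    then have "\<not> (k * ?L \<le> a \<and> a < (k+1) * ?L)" by (auto simp: algebra_simps)
    then have "a div ?L \<noteq> k" using div_eq_iff_bounds[of ?L a k] by simp
    then show "F a * of_real (hdv e d k a) = 0" unfolding hdv_def by simp
  qed
  have "(\<Sum>a<M. F a * of_real (hdv e d k a)) = (\<Sum>a\<in>{k*?L..<k*?L+?L}. F a * of_real (hdv e d k a))"
    using sum.mono_neutral_left[OF _ sub zero] by simp
  also have "\<dots> = (\<Sum>x<?L. F (k * ?L + x) * of_real (hdv e d k (k * ?L + x)))"
    using sum.shift_bounds_nat_ivl[of "\<lambda>a. F a * of_real (hdv e d k a)" 0 "k*?L" ?L]
    by (simp add: atLeast0LessThan add.commute)
  also have "\<dots> = (\<Sum>x<?L. F (k * ?L + x) * of_real (hdv e d 0 x))"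
  proof (intro sum.cong refl)
    fix x assume "x \<in> {..<?L}"
    then have x: "x < ?L" by simp
    have "(k * ?L + x) div ?L = k" "(k * ?L + x) mod ?L = x" "x div ?L = 0" "x mod ?L = x"
      using x by auto
    then show "F (k * ?L + x) * of_real (hdv e d k (k * ?L + x)) = F (k * ?L + x) * of_real (hdv e d 0 x)"
      unfolding hdv_def by simp
  qed
  finally show ?thesis .
qed

lemma coef_local:
  assumes jn: "j < n" and k1: "fst k < 2^j" and k2: "snd k < 2^j"
  shows "coef n W (Some (e, j, k)) = of_real (2^j / 2^n) *
     (\<Sum>x<(2::nat)^(n-j). \<Sum>y<(2::nat)^(n-j). W (fst k * 2^(n-j) + x, snd k * 2^(n-j) + y)
         * of_real (hdv (fst e) (n-j) 0 x * hdv (snd e) (n-j) 0 y))"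
proof -
  let ?d = "n - j"
  have nn: "(2::nat)^n = 2^j * 2^?d" using jn by (simp flip: power_add)
  have b1: "(fst k + 1) * 2^?d \<le> 2^n" unfolding nn using k1
    by (metis Suc_eq_plus1 Suc_leI mult_le_mono1)
  have b2: "(snd k + 1) * 2^?d \<le> 2^n" unfolding nn using k2
    by (metis Suc_eq_plus1 Suc_leI mult_le_mono1)
  have "coef n W (Some (e, j, k)) = (\<Sum>a<2^n. \<Sum>c<2^n. W (a, c) *
      of_real (2^j * hdv (fst e) ?d (fst k) a * hdv (snd e) ?d (snd k) c / 2^n))"
    unfolding coef_def sum_grid hbv_def by simp
  also have "\<dots> = of_real (2^j / 2^n) * (\<Sum>a<2^n. (\<Sum>c<2^n. W (a, c) * of_real (hdv (snd e) ?d (snd k) c))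
                        * of_real (hdv (fst e) ?d (fst k) a))"
    by (simp add: sum_distrib_left sum_distrib_right algebra_simps)
  also have "\<dots> = of_real (2^j / 2^n) * (\<Sum>a<2^n. (\<Sum>y<(2::nat)^?d. W (a, snd k * 2^?d + y) * of_real (hdv (snd e) ?d 0 y))
                        * of_real (hdv (fst e) ?d (fst k) a))"
    using localize1[OF b2, of "\<lambda>c. W (_, c)"] by simp
  also have "\<dots> = of_real (2^j / 2^n) * (\<Sum>x<(2::nat)^?d. (\<Sum>y<(2::nat)^?d. W (fst k * 2^?d + x, snd k * 2^?d + y) * of_real (hdv (snd e) ?d 0 y))
                        * of_real (hdv (fst e) ?d 0 x))"
    using localize1[OF b1, of "\<lambda>a. (\<Sum>y<(2::nat)^?d. W (a, snd k * 2^?d + y) * of_real (hdv (snd e) ?d 0 y))"] by simp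
  finally show ?thesis by (simp add: sum_distrib_left sum_distrib_right algebra_simps)
qed

lemma hd_abs: "\<bar>hdv e d k x\<bar> \<le> 1" unfolding hdv_def by auto

lemma hd_sum_zero:
  assumes "d \<ge> 1" "e \<noteq> 0"
  shows "(\<Sum>x<(2::nat)^d. hdv e d 0 x) = 0"
proof -
  define H where "H = (2::nat)^(d-1)"
  have L: "(2::nat)^d = H + H" unfolding H_def using assms by (cases d) auto
  have v: "x < 2^d \<Longrightarrow> hdv e d 0 x = (if x < H then 1 else -1)" for x
    unfolding hdv_def H_def using assms by simp
  have "(\<Sum>x<(2::nat)^d. hdv e d 0 x) = (\<Sum>x<H + H. (if x < H then 1 else -1))"
    using v L by (intro sum.cong) auto
  also have "\<dots> = (\<Sum>x\<in>{0..<H}. (if x < H then 1 else -1)) + (\<Sum>x\<in>{H..<H+H}. (if x < H then 1 else (-1::real)))"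
    unfolding lessThan_atLeast0 by (rule sum.atLeastLessThan_concat[symmetric]) auto
  also have "\<dots> = (\<Sum>x\<in>{0..<H}. 1) + (\<Sum>x\<in>{H..<H+H}. (-1::real))"
    by (intro arg_cong2[where f="(+)"] sum.cong) auto
  also have "\<dots> = real H - real H" by simp
  finally show ?thesis by simp
qed

lemma coef_bound_local:
  assumes jn: "j < n" and k1: "fst k < 2^j" and k2: "snd k < 2^j" and e: "e \<in> EE"
  shows "cmod (coef n W (Some (e, j, k))) \<le>
    TVh (2^(n-j)) (\<lambda>p. W (fst k * 2^(n-j) + fst p, snd k * 2^(n-j) + snd p))
  + TVv (2^(n-j)) (\<lambda>p. W (fst k * 2^(n-j) + fst p, snd k * 2^(n-j) + snd p))"
proof -
  let ?d = "n - j" let ?L = "(2::nat)^(n-j)"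
  let ?w = "\<lambda>p. W (fst k * 2^(n-j) + fst p, snd k * 2^(n-j) + snd p)"
  let ?g = "\<lambda>p. hdv (fst e) ?d 0 (fst p) * hdv (snd e) ?d 0 (snd p)"
  let ?S = "\<Sum>x<?L. \<Sum>y<?L. ?w (x, y) * of_real (?g (x, y))"
  let ?T = "TVh ?L ?w + TVv ?L ?w"
  have d: "?d \<ge> 1" using jn by simp
  have g1: "\<bar>?g (x, y)\<bar> \<le> 1" for x y
    using hd_abs[of "fst e" ?d 0 x] hd_abs[of "snd e" ?d 0 y] by (simp add: abs_mult mult_le_one)
  have g0: "(\<Sum>x<?L. \<Sum>y<?L. ?g (x, y)) = 0"
  proof -
    have "(\<Sum>x<?L. \<Sum>y<?L. ?g (x, y)) = (\<Sum>x<?L. hdv (fst e) ?d 0 x) * (\<Sum>y<?L. hdv (snd e) ?d 0 y)"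
      by (simp add: sum_product)
    moreover have "fst e \<noteq> 0 \<or> snd e \<noteq> 0" using e unfolding EE_def by auto
    ultimately show ?thesis using hd_sum_zero[OF d] by auto
  qed
  have P: "real ?L * real ?L * cmod ?S \<le> real ?L * real ?L * (real ?L * ?T)"
    using poincare_sq[of ?g ?L ?w, OF g1 g0] by simp
  have Lpos: "real ?L > 0" by simp
  have S: "cmod ?S \<le> real ?L * ?T"
    using P Lpos by (simp add: mult_le_cancel_left_pos)
  have c: "coef n W (Some (e, j, k)) = of_real (2^j / 2^n) * ?S"
    using coef_local[OF jn k1 k2, of W e] by simp
  have nn: "(2::real)^n = 2^j * 2^?d" using jn by (simp flip: power_add)
  have "cmod (coef n W (Some (e, j, k))) = (2^j / 2^n) * cmod ?S"
    unfolding c norm_mult norm_of_real by simp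
  also have "\<dots> \<le> (2^j / 2^n) * (real ?L * ?T)"
    using S by (intro mult_left_mono) auto
  also have "\<dots> = ?T" unfolding nn by simp
  finally show ?thesis .
qed

lemma blocksum: "(\<Sum>a<K*L. f a) = (\<Sum>k<K. \<Sum>x<(L::nat). f (k*L+x))"
proof (induction K)
  case 0 then show ?case by simp
next
  case (Suc K)
  have "(\<Sum>a<Suc K * L. f a) = (\<Sum>a\<in>{0..<K*L}. f a) + (\<Sum>a\<in>{K*L..<K*L+L}. f a)"
  proof -
    have eq: "Suc K * L = K * L + L" by simp
    show ?thesis unfolding lessThan_atLeast0 eq by (rule sum.atLeastLessThan_concat[symmetric]) auto
  qed
  also have "(\<Sum>a\<in>{K*L..<K*L+L}. f a) = (\<Sum>x<L. f (K*L+x))"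
    using sum.shift_bounds_nat_ivl[of f 0 "K*L" L] by (simp add: atLeast0LessThan add.commute)
  finally show ?case using Suc by (simp add: lessThan_atLeast0)
qed

definition G0 :: "nat \<Rightarrow> arr \<Rightarrow> nat \<times> nat \<Rightarrow> real" where
  "G0 N W p = cmod (grad N W (fst p, snd p, 0))"
definition G1 :: "nat \<Rightarrow> arr \<Rightarrow> nat \<times> nat \<Rightarrow> real" where
  "G1 N W p = cmod (grad N W (fst p, snd p, 1))"

lemma tv_split: "tv_norm N W = (\<Sum>a<N. \<Sum>c<N. G0 N W (a, c) + G1 N W (a, c))"
proof -
  have "tv_norm N W = (\<Sum>a<N. \<Sum>c<N. \<Sum>i<2. cmod (grad N W (a, c, i)))"
    unfolding tv_norm_def grad_index_def
    by (simp add: sum.cartesian_product atLeast0LessThan)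
  also have "\<dots> = (\<Sum>a<N. \<Sum>c<N. G0 N W (a, c) + G1 N W (a, c))"
    unfolding G0_def G1_def by (simp add: numeral_2_eq_2)
  finally show ?thesis .
qed

lemma level_tv:
  assumes jn: "j < n"
  shows "(\<Sum>k\<in>grid (2^j).
     TVh (2^(n-j)) (\<lambda>p. W (fst k * 2^(n-j) + fst p, snd k * 2^(n-j) + snd p))
   + TVv (2^(n-j)) (\<lambda>p. W (fst k * 2^(n-j) + fst p, snd k * 2^(n-j) + snd p)))
   \<le> tv_norm (2^n) W"
proof -
  let ?L = "(2::nat)^(n-j)" let ?K = "(2::nat)^j" let ?N = "(2::nat)^n"
  have nn: "?N = ?K * ?L" using jn by (simp flip: power_add)
  have h: "TVh ?L (\<lambda>p. W (k1 * ?L + fst p, k2 * ?L + snd p)) \<le> (\<Sum>y<?L. \<Sum>t<?L. G0 ?N W (k1 * ?L + t, k2 * ?L + y))"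
    if "k1 < ?K" "k2 < ?K" for k1 k2
    unfolding TVh_def fst_conv snd_conv
  proof (intro sum_mono)
    fix y assume "y \<in> {..<?L}"
    have "(\<Sum>t<?L-1. cmod (W (k1 * ?L + Suc t, k2 * ?L + y) - W (k1 * ?L + t, k2 * ?L + y)))
        = (\<Sum>t<?L-1. G0 ?N W (k1 * ?L + t, k2 * ?L + y))"
    proof (intro sum.cong refl)
      fix t assume "t \<in> {..<?L-1}"
      then have "k1 * ?L + t + 1 < k1 * ?L + ?L" by auto
      also have "\<dots> \<le> ?N" unfolding nn using that(1)
        by (metis add.commute mult_Suc mult_le_mono1 Suc_leI mult.commute)
      finally show "cmod (W (k1 * ?L + Suc t, k2 * ?L + y) - W (k1 * ?L + t, k2 * ?L + y)) = G0 ?N W (k1 * ?L + t, k2 * ?L + y)"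
        unfolding G0_def grad_def by simp
    qed
    also have "\<dots> \<le> (\<Sum>t<?L. G0 ?N W (k1 * ?L + t, k2 * ?L + y))"
      by (intro sum_mono2) (auto simp: G0_def)
    finally show "(\<Sum>t<?L-1. cmod (W (k1 * ?L + Suc t, k2 * ?L + y) - W (k1 * ?L + t, k2 * ?L + y)))
        \<le> (\<Sum>t<?L. G0 ?N W (k1 * ?L + t, k2 * ?L + y))" .
  qed
  have v: "TVv ?L (\<lambda>p. W (k1 * ?L + fst p, k2 * ?L + snd p)) \<le> (\<Sum>x<?L. \<Sum>t<?L. G1 ?N W (k1 * ?L + x, k2 * ?L + t))"
    if "k1 < ?K" "k2 < ?K" for k1 k2
    unfolding TVv_def fst_conv snd_conv
  proof (intro sum_mono)
    fix x assume "x \<in> {..<?L}"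
    have "(\<Sum>t<?L-1. cmod (W (k1 * ?L + x, k2 * ?L + Suc t) - W (k1 * ?L + x, k2 * ?L + t)))
        = (\<Sum>t<?L-1. G1 ?N W (k1 * ?L + x, k2 * ?L + t))"
    proof (intro sum.cong refl)
      fix t assume "t \<in> {..<?L-1}"
      then have "k2 * ?L + t + 1 < k2 * ?L + ?L" by auto
      also have "\<dots> \<le> ?N" unfolding nn using that(2)
        by (metis add.commute mult_Suc mult_le_mono1 Suc_leI mult.commute)
      finally show "cmod (W (k1 * ?L + x, k2 * ?L + Suc t) - W (k1 * ?L + x, k2 * ?L + t)) = G1 ?N W (k1 * ?L + x, k2 * ?L + t)"
        unfolding G1_def grad_def by simp
    qed
    also have "\<dots> \<le> (\<Sum>t<?L. G1 ?N W (k1 * ?L + x, k2 * ?L + t))"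
      by (intro sum_mono2) (auto simp: G1_def)
    finally show "(\<Sum>t<?L-1. cmod (W (k1 * ?L + x, k2 * ?L + Suc t) - W (k1 * ?L + x, k2 * ?L + t)))
        \<le> (\<Sum>t<?L. G1 ?N W (k1 * ?L + x, k2 * ?L + t))" .
  qed
  have "(\<Sum>k\<in>grid ?K.
     TVh ?L (\<lambda>p. W (fst k * ?L + fst p, snd k * ?L + snd p))
   + TVv ?L (\<lambda>p. W (fst k * ?L + fst p, snd k * ?L + snd p)))
   = (\<Sum>k1<?K. \<Sum>k2<?K. TVh ?L (\<lambda>p. W (k1 * ?L + fst p, k2 * ?L + snd p))
   + TVv ?L (\<lambda>p. W (k1 * ?L + fst p, k2 * ?L + snd p)))"
    unfolding sum_grid by simp
  also have "\<dots> \<le> (\<Sum>k1<?K. \<Sum>k2<?K. (\<Sum>y<?L. \<Sum>t<?L. G0 ?N W (k1 * ?L + t, k2 * ?L + y))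
                 + (\<Sum>x<?L. \<Sum>t<?L. G1 ?N W (k1 * ?L + x, k2 * ?L + t)))"
    using h v by (intro sum_mono add_mono) auto
  also have "\<dots> = (\<Sum>a<?N. \<Sum>c<?N. G0 ?N W (a, c) + G1 ?N W (a, c))"
  proof -
    have A: "(\<Sum>a<?N. \<Sum>c<?N. F (a, c)) = (\<Sum>k1<?K. \<Sum>x<?L. \<Sum>k2<?K. \<Sum>y<?L. F (k1 * ?L + x, k2 * ?L + y))" for F
      unfolding nn blocksum ..
    have B: "(\<Sum>k1<?K. \<Sum>x<?L. \<Sum>k2<?K. \<Sum>y<?L. F (k1 * ?L + x, k2 * ?L + y))
       = (\<Sum>k1<?K. \<Sum>k2<?K. \<Sum>x<?L. \<Sum>y<?L. F (k1 * ?L + x, k2 * ?L + y))" for F :: "nat \<times> nat \<Rightarrow> real"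
      by (rule sum.cong[OF refl]) (rule sum.swap)
    have C: "(\<Sum>x<?L. \<Sum>y<?L. F (k1 * ?L + x, k2 * ?L + y)) = (\<Sum>y<?L. \<Sum>x<?L. F (k1 * ?L + x, k2 * ?L + y))" for F :: "nat \<times> nat \<Rightarrow> real" and k1 k2
      by (rule sum.swap)
    show ?thesis
      unfolding sum.distrib A B C[of "G0 ?N W"] by simp
  qed
  also have "\<dots> = tv_norm ?N W" by (rule tv_split[symmetric])
  finally show ?thesis .
qed

lemma card_EE: "card EE = 3" unfolding EE_def by simp
lemma finite_EE[simp]: "finite EE" unfolding EE_def by simp

lemma l1_bound:
  "(\<Sum>b\<in>haar_index n - {None}. cmod (coef n W b)) \<le> 3 * real n * tv_norm (2^n) W"
proof -
  define Sg where "Sg = (SIGMA j:{..<n}. EE \<times> grid (2^j))"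
  define \<phi> where "\<phi> = (\<lambda>x :: nat \<times> (nat \<times> nat) \<times> nat \<times> nat. Some (fst (snd x), fst x, snd (snd x)))"
  have img: "haar_index n - {None} = \<phi> ` Sg"
    unfolding haar_index_def Sg_def \<phi>_def EE_def grid_def
    by (auto simp: image_iff)
  have inj: "inj_on \<phi> Sg" unfolding \<phi>_def inj_on_def by (auto simp: prod_eq_iff)
  have fS: "finite Sg" unfolding Sg_def by simp
  have "(\<Sum>b\<in>haar_index n - {None}. cmod (coef n W b)) = (\<Sum>x\<in>Sg. cmod (coef n W (\<phi> x)))"
    unfolding img by (rule sum.reindex[OF inj, unfolded comp_def])
  also have "\<dots> = (\<Sum>j<n. \<Sum>ek\<in>EE \<times> grid (2^j). cmod (coef n W (Some (fst ek, j, snd ek))))"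
    unfolding Sg_def \<phi>_def by (subst sum.Sigma) (auto simp: case_prod_beta)
  also have "\<dots> = (\<Sum>j<n. \<Sum>e\<in>EE. \<Sum>k\<in>grid (2^j). cmod (coef n W (Some (e, j, k))))"
    by (simp add: sum.cartesian_product case_prod_beta)
  also have "\<dots> \<le> (\<Sum>j<n. \<Sum>e\<in>EE. tv_norm (2^n) W)"
  proof (intro sum_mono)
    fix j e assume j: "j \<in> {..<n}" and e: "e \<in> EE"
    have "(\<Sum>k\<in>grid (2^j). cmod (coef n W (Some (e, j, k)))) \<le>
       (\<Sum>k\<in>grid (2^j).
     TVh (2^(n-j)) (\<lambda>p. W (fst k * 2^(n-j) + fst p, snd k * 2^(n-j) + snd p))
   + TVv (2^(n-j)) (\<lambda>p. W (fst k * 2^(n-j) + fst p, snd k * 2^(n-j) + snd p)))"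
      using j e by (intro sum_mono coef_bound_local) (auto simp: grid_def)
    also have "\<dots> \<le> tv_norm (2^n) W" using level_tv j by simp
    finally show "(\<Sum>k\<in>grid (2^j). cmod (coef n W (Some (e, j, k)))) \<le> tv_norm (2^n) W" .
  qed
  also have "\<dots> = 3 * real n * tv_norm (2^n) W" by (simp add: card_EE)
  finally show ?thesis .
qed

lemma shift_ivl: "(\<Sum>i\<in>{m..<m+t}. f i) = (\<Sum>x<(t::nat). f (m+x))"
  using sum.shift_bounds_nat_ivl[of f 0 m t] by (simp add: atLeast0LessThan add.commute)

lemma seq_blocks:
  fixes a :: "nat \<Rightarrow> real"
  assumes nn: "\<And>i. a i \<ge> 0" and mono: "\<And>q i. q \<le> i \<Longrightarrow> a i \<le> a q" and t: "t \<ge> 1"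
  shows "(\<Sum>j<K. sqrt (\<Sum>i\<in>{Suc j*t..<Suc j*t+t}. (a i)^2)) \<le> (\<Sum>i<K*t. a i) / sqrt t"
proof -
  have tp: "real t > 0" using t by simp
  have step: "sqrt (\<Sum>i\<in>{Suc j*t..<Suc j*t+t}. (a i)^2) \<le> (\<Sum>i\<in>{j*t..<j*t+t}. a i) / sqrt t" for j
  proof -
    let ?A = "(\<Sum>i\<in>{j*t..<j*t+t}. a i)"
    have le: "a i \<le> ?A / t" if "i \<in> {Suc j*t..<Suc j*t+t}" for i
    proof -
      have "(\<Sum>q\<in>{j*t..<j*t+t}. a i) \<le> ?A"
        using that by (intro sum_mono mono) auto
      then have "real t * a i \<le> ?A" by simp
      then show ?thesis using tp by (simp add: field_simps)
    qed
    have "(\<Sum>i\<in>{Suc j*t..<Suc j*t+t}. (a i)^2) \<le> (\<Sum>i\<in>{Suc j*t..<Suc j*t+t}. (?A / t)^2)"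
      using le nn by (intro sum_mono power_mono) auto
    also have "\<dots> = real t * (?A / t)^2" by simp
    also have "\<dots> = (?A / sqrt t)^2" using tp by (simp add: power_divide field_simps power2_eq_square)
    finally have "sqrt (\<Sum>i\<in>{Suc j*t..<Suc j*t+t}. (a i)^2) \<le> sqrt ((?A / sqrt t)^2)"
      by (rule real_sqrt_le_mono)
    also have "\<dots> = ?A / sqrt t" using nn by (simp add: sum_nonneg)
    finally show ?thesis .
  qed
  have "(\<Sum>j<K. sqrt (\<Sum>i\<in>{Suc j*t..<Suc j*t+t}. (a i)^2)) \<le> (\<Sum>j<K. (\<Sum>i\<in>{j*t..<j*t+t}. a i) / sqrt t)"
    by (intro sum_mono step)
  also have "\<dots> = (\<Sum>j<K. \<Sum>x<t. a (j*t+x)) / sqrt t"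
  proof -
    have "(\<Sum>i\<in>{j*t..<j*t+t}. a i) = (\<Sum>x<t. a (j*t+x))" for j
      using sum.shift_bounds_nat_ivl[of a 0 "j*t" t] by (simp add: atLeast0LessThan add.commute)
    then show ?thesis by (simp add: sum_divide_distrib)
  qed
  also have "\<dots> = (\<Sum>i<K*t. a i) / sqrt t" by (simp add: blocksum)
  finally show ?thesis .
qed

lemma block_decomp:
  fixes ys :: "'a list" and G :: "'a \<Rightarrow> 'b::comm_monoid_add"
  assumes d: "distinct ys" and t: "t \<ge> 1"
  defines "B \<equiv> \<lambda>j. (!) ys ` ({j*t..<j*t+t} \<inter> {..<length ys})"
  shows "(\<Sum>b\<in>B j. G b) = (\<Sum>i\<in>{j*t..<j*t+t}. if i < length ys then G (ys ! i) else 0)"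
    and "(\<Sum>b\<in>set ys. G b) = (\<Sum>j<Suc (length ys). \<Sum>b\<in>B j. G b)"
    and "card (B j) \<le> t"
    and "B j \<subseteq> set ys"
proof -
  let ?M = "length ys"
  let ?G' = "\<lambda>i. if i < ?M then G (ys ! i) else 0"
  have injI: "inj_on ((!) ys) I" if "I \<subseteq> {..<?M}" for I
    using inj_on_nth[OF d, of I] that by auto
  have Bj: "(\<Sum>b\<in>B j. G b) = (\<Sum>i\<in>{j*t..<j*t+t}. ?G' i)" for j
  proof -
    have "(\<Sum>b\<in>B j. G b) = (\<Sum>i\<in>{j*t..<j*t+t} \<inter> {..<?M}. G (ys ! i))"
      unfolding B_def by (subst sum.reindex[OF injI]) auto
    also have "\<dots> = (\<Sum>i\<in>{j*t..<j*t+t}. ?G' i)"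
      by (subst sum.inter_restrict) auto
    finally show ?thesis .
  qed
  then show "(\<Sum>b\<in>B j. G b) = (\<Sum>i\<in>{j*t..<j*t+t}. ?G' i)" .
  have "(\<Sum>b\<in>set ys. G b) = (\<Sum>i<?M. G (ys ! i))"
  proof -
    have "set ys = (!) ys ` {..<?M}" by (auto simp: set_conv_nth)
    then show ?thesis by (simp add: sum.reindex[OF injI])
  qed
  also have "\<dots> = (\<Sum>i<Suc ?M * t. ?G' i)"
  proof -
    have "?M * 1 \<le> ?M * t" using t by (rule mult_le_mono2)
    then have "?M \<le> Suc ?M * t" by (metis mult_1_right le_add2 mult_Suc order_trans)
    then have "{..<?M} \<subseteq> {..<Suc ?M * t}" by auto
    then have "(\<Sum>i<Suc ?M * t. ?G' i) = (\<Sum>i<?M. ?G' i)"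
      by (intro sum.mono_neutral_right) auto
    then show ?thesis by simp
  qed
  also have "\<dots> = (\<Sum>j<Suc ?M. \<Sum>x<t. ?G' (j*t+x))" by (rule blocksum)
  also have "\<dots> = (\<Sum>j<Suc ?M. \<Sum>b\<in>B j. G b)"
  proof (intro sum.cong refl)
    fix j
    have "(\<Sum>i\<in>{j*t..<j*t+t}. ?G' i) = (\<Sum>x<t. ?G' (j*t+x))"
      by (rule shift_ivl)
    then show "(\<Sum>x<t. ?G' (j*t+x)) = (\<Sum>b\<in>B j. G b)" using Bj by simp
  qed
  finally show "(\<Sum>b\<in>set ys. G b) = (\<Sum>j<Suc ?M. \<Sum>b\<in>B j. G b)" .
  show "card (B j) \<le> t"
  proof -
    have "card (B j) \<le> card ({j*t..<j*t+t} \<inter> {..<?M})" unfolding B_def by (rule card_image_le) simp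
    also have "\<dots> \<le> card {j*t..<j*t+t}" by (intro card_mono) auto
    finally show ?thesis by simp
  qed
  show "B j \<subseteq> set ys" unfolding B_def by auto
qed

lemma grad_diff: "grad N (\<lambda>p. X p - Y p) q = grad N X q - grad N Y q"
  unfolding grad_def by (cases q) auto

lemma sq_diff_le: "(cmod (x - y))^2 \<le> 2 * (cmod x)^2 + 2 * (cmod y)^2"
proof -
  have "cmod (x - y) \<le> cmod x + cmod y" by (rule norm_triangle_ineq4)
  then have "(cmod (x - y))^2 \<le> (cmod x + cmod y)^2" by (intro power_mono) auto
  also have "\<dots> \<le> 2 * (cmod x)^2 + 2 * (cmod y)^2"
    using sum_squares_bound[of "cmod x" "cmod y"] by (simp add: power2_eq_square algebra_simps)
  finally show ?thesis .
qed

lemma shift_sum_le: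
  fixes f :: "nat \<Rightarrow> real"
  assumes "\<And>i. f i \<ge> 0" "f N = 0"
  shows "(\<Sum>a<N. f (Suc a)) \<le> (\<Sum>a<N. f a)"
proof -
  have "(\<Sum>a<Suc N. f a) = f 0 + (\<Sum>a<N. f (Suc a))" by (rule sum.lessThan_Suc_shift)
  moreover have "(\<Sum>a<Suc N. f a) = (\<Sum>a<N. f a)" using assms by simp
  ultimately show ?thesis using assms(1)[of 0] by simp
qed

lemma grad_l2:
  assumes D: "is_array N D"
  shows "(\<Sum>q\<in>grad_index N. (cmod (grad N D q))^2) \<le> 8 * (\<Sum>p\<in>grid N. (cmod (D p))^2)"
proof -
  have z1: "D (N, c) = 0" for c using D unfolding is_array_def grid_def by auto
  have z2: "D (a, N) = 0" for a using D unfolding is_array_def grid_def by auto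
  have "(\<Sum>q\<in>grad_index N. (cmod (grad N D q))^2) = (\<Sum>a<N. \<Sum>c<N. \<Sum>i<2. (cmod (grad N D (a, c, i)))^2)"
    unfolding grad_index_def by (simp add: sum.cartesian_product atLeast0LessThan)
  also have "\<dots> = (\<Sum>a<N. \<Sum>c<N. (cmod (grad N D (a, c, 0)))^2 + (cmod (grad N D (a, c, 1)))^2)"
    by (simp add: numeral_2_eq_2)
  also have "\<dots> \<le> (\<Sum>a<N. \<Sum>c<N. (2 * (cmod (D (Suc a, c)))^2 + 2 * (cmod (D (a, c)))^2)
                                   + (2 * (cmod (D (a, Suc c)))^2 + 2 * (cmod (D (a, c)))^2))"
  proof (intro sum_mono add_mono)
    fix a c
    show "(cmod (grad N D (a, c, 0)))^2 \<le> 2 * (cmod (D (Suc a, c)))^2 + 2 * (cmod (D (a, c)))^2"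
      unfolding grad_def using sq_diff_le[of "D (Suc a, c)" "D (a, c)"] by auto
    show "(cmod (grad N D (a, c, 1)))^2 \<le> 2 * (cmod (D (a, Suc c)))^2 + 2 * (cmod (D (a, c)))^2"
      unfolding grad_def using sq_diff_le[of "D (a, Suc c)" "D (a, c)"] by auto
  qed
  also have "\<dots> = 2 * (\<Sum>c<N. \<Sum>a<N. (cmod (D (Suc a, c)))^2) + 2 * (\<Sum>a<N. \<Sum>c<N. (cmod (D (a, Suc c)))^2)
                  + 4 * (\<Sum>a<N. \<Sum>c<N. (cmod (D (a, c)))^2)"
  proof -
    have sw: "(\<Sum>a<N. \<Sum>c<N. (cmod (D (Suc a, c)))^2) = (\<Sum>c<N. \<Sum>a<N. (cmod (D (Suc a, c)))^2)"
      by (rule sum.swap)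
    show ?thesis unfolding sw[symmetric] by (simp add: sum.distrib sum_distrib_left algebra_simps)
  qed
  also have "\<dots> \<le> 2 * (\<Sum>c<N. \<Sum>a<N. (cmod (D (a, c)))^2) + 2 * (\<Sum>a<N. \<Sum>c<N. (cmod (D (a, c)))^2)
                  + 4 * (\<Sum>a<N. \<Sum>c<N. (cmod (D (a, c)))^2)"
  proof -
    have h1: "(\<Sum>a<N. (cmod (D (Suc a, c)))^2) \<le> (\<Sum>a<N. (cmod (D (a, c)))^2)" for c
      using shift_sum_le[of "\<lambda>a. (cmod (D (a, c)))^2" N] z1 by simp
    have h2: "(\<Sum>c<N. (cmod (D (a, Suc c)))^2) \<le> (\<Sum>c<N. (cmod (D (a, c)))^2)" for a
      using shift_sum_le[of "\<lambda>c. (cmod (D (a, c)))^2" N] z2 by simp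
    have "(\<Sum>c<N. \<Sum>a<N. (cmod (D (Suc a, c)))^2) \<le> (\<Sum>c<N. \<Sum>a<N. (cmod (D (a, c)))^2)"
      using h1 by (rule sum_mono)
    moreover have "(\<Sum>a<N. \<Sum>c<N. (cmod (D (a, Suc c)))^2) \<le> (\<Sum>a<N. \<Sum>c<N. (cmod (D (a, c)))^2)"
      using h2 by (rule sum_mono)
    ultimately show ?thesis by linarith
  qed
  also have "\<dots> = 8 * (\<Sum>p\<in>grid N. (cmod (D p))^2)"
  proof -
    have sw: "(\<Sum>c<N. \<Sum>a<N. (cmod (D (a, c)))^2) = (\<Sum>a<N. \<Sum>c<N. (cmod (D (a, c)))^2)"
      by (rule sum.swap)
    show ?thesis unfolding sum_grid sw by simp
  qed
  finally show ?thesis .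
qed

lemma cone:
  fixes X Xh :: arr
  assumes S: "S \<subseteq> grad_index N" and tv: "tv_norm N Xh \<le> tv_norm N X"
  shows "tv_norm N (\<lambda>p. X p - Xh p) \<le> 2 * (\<Sum>q\<in>S. cmod (grad N (\<lambda>p. X p - Xh p) q))
           + 2 * (\<Sum>q\<in>grad_index N - S. cmod (grad N X q))"
proof -
  let ?D = "\<lambda>p. X p - Xh p"
  have fin: "finite (grad_index N)" unfolding grad_index_def by simp
  have finS: "finite S" using finite_subset[OF S fin] .
  have xh: "grad N Xh q = grad N X q - grad N ?D q" for q unfolding grad_diff by simp
  have split: "(\<Sum>q\<in>grad_index N. f q) = (\<Sum>q\<in>S. f q) + (\<Sum>q\<in>grad_index N - S. f q)" for f :: "_ \<Rightarrow> real"
    using sum.subset_diff[OF S fin] by (simp add: add.commute)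
  have a1: "(\<Sum>q\<in>S. cmod (grad N X q)) - (\<Sum>q\<in>S. cmod (grad N ?D q)) \<le> (\<Sum>q\<in>S. cmod (grad N Xh q))"
    unfolding xh sum_subtractf[symmetric] by (intro sum_mono) (rule norm_triangle_ineq2)
  have a2: "(\<Sum>q\<in>grad_index N - S. cmod (grad N ?D q)) - (\<Sum>q\<in>grad_index N - S. cmod (grad N X q))
       \<le> (\<Sum>q\<in>grad_index N - S. cmod (grad N Xh q))"
    unfolding xh sum_subtractf[symmetric]
  proof (intro sum_mono)
    fix q
    show "cmod (grad N ?D q) - cmod (grad N X q) \<le> cmod (grad N X q - grad N ?D q)"
      using norm_triangle_ineq2[of "grad N ?D q" "grad N X q"] by (simp add: norm_minus_commute)
  qed
  have "tv_norm N Xh = (\<Sum>q\<in>S. cmod (grad N Xh q)) + (\<Sum>q\<in>grad_index N - S. cmod (grad N Xh q))"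
    unfolding tv_norm_def by (rule split)
  moreover have "tv_norm N X = (\<Sum>q\<in>S. cmod (grad N X q)) + (\<Sum>q\<in>grad_index N - S. cmod (grad N X q))"
    unfolding tv_norm_def by (rule split)
  moreover have "tv_norm N ?D = (\<Sum>q\<in>S. cmod (grad N ?D q)) + (\<Sum>q\<in>grad_index N - S. cmod (grad N ?D q))"
    unfolding tv_norm_def by (rule split)
  ultimately show ?thesis using a1 a2 tv by linarith
qed

lemma cs_sum:
  fixes f :: "'a \<Rightarrow> real"
  assumes "finite T" "S \<subseteq> T" "\<And>q. f q \<ge> 0"
  shows "(\<Sum>q\<in>S. f q) \<le> sqrt (real (card S)) * sqrt (\<Sum>q\<in>T. (f q)^2)"
proof -
  have "(\<Sum>q\<in>S. f q) = (\<Sum>q\<in>S. \<bar>f q\<bar> * \<bar>1\<bar>)" using assms(3) by simp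
  also have "\<dots> \<le> L2_set f S * L2_set (\<lambda>_. 1) S" by (rule L2_set_mult_ineq)
  also have "\<dots> = sqrt (\<Sum>q\<in>S. (f q)^2) * sqrt (real (card S))"
    unfolding L2_set_def by simp
  also have "\<dots> \<le> sqrt (\<Sum>q\<in>T. (f q)^2) * sqrt (real (card S))"
    using assms by (intro mult_right_mono real_sqrt_le_mono sum_mono2) auto
  finally show ?thesis by (simp add: mult.commute)
qed

lemma vec_norm2_L2: "vec_norm2 m v = L2_set (\<lambda>i. cmod (v i)) {..<m}"
  unfolding vec_norm2_def L2_set_def ..

lemma vec_norm2_nonneg: "vec_norm2 m v \<ge> 0"
  unfolding vec_norm2_def by (simp add: sum_nonneg)

lemma vec_tri: "vec_norm2 m (\<lambda>i. u i + v i) \<le> vec_norm2 m u + vec_norm2 m v"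
proof -
  have "L2_set (\<lambda>i. cmod (u i + v i)) {..<m} \<le> L2_set (\<lambda>i. cmod (u i) + cmod (v i)) {..<m}"
    by (intro L2_set_mono norm_triangle_ineq) auto
  also have "\<dots> \<le> L2_set (\<lambda>i. cmod (u i)) {..<m} + L2_set (\<lambda>i. cmod (v i)) {..<m}"
    by (rule L2_set_triangle_ineq)
  finally show ?thesis unfolding vec_norm2_L2 .
qed

lemma vec_minus: "vec_norm2 m (\<lambda>i. - v i) = vec_norm2 m v"
  unfolding vec_norm2_def by simp

lemma vec_sum: "finite J \<Longrightarrow> vec_norm2 m (\<lambda>i. \<Sum>j\<in>J. v j i) \<le> (\<Sum>j\<in>J. vec_norm2 m (v j))"
proof (induction J rule: finite_induct)
  case empty then show ?case unfolding vec_norm2_def by simp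
next
  case (insert x F)
  have "vec_norm2 m (\<lambda>i. \<Sum>j\<in>insert x F. v j i) = vec_norm2 m (\<lambda>i. v x i + (\<Sum>j\<in>F. v j i))"
    using insert by simp
  also have "\<dots> \<le> vec_norm2 m (v x) + vec_norm2 m (\<lambda>i. \<Sum>j\<in>F. v j i)" by (rule vec_tri)
  also have "\<dots> \<le> vec_norm2 m (v x) + (\<Sum>j\<in>F. vec_norm2 m (v j))" using insert by simp
  finally show ?case using insert by simp
qed

lemma is_array_add: "is_array N X \<Longrightarrow> is_array N Y \<Longrightarrow> is_array N (\<lambda>p. X p + Y p)"
  unfolding is_array_def by simp
lemma is_array_zero: "is_array N (\<lambda>p. 0)"
  unfolding is_array_def by simp
lemma is_array_diff: "is_array N X \<Longrightarrow> is_array N Y \<Longrightarrow> is_array N (\<lambda>p. X p - Y p)"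
  unfolding is_array_def by simp
lemma is_array_sum: "(\<And>j. j \<in> J \<Longrightarrow> is_array N (V j)) \<Longrightarrow> is_array N (\<lambda>p. \<Sum>j\<in>J. V j p)"
  unfolding is_array_def by simp

lemma lin_add: "linear_meas N m A \<Longrightarrow> is_array N X \<Longrightarrow> is_array N Y \<Longrightarrow>
   A (\<lambda>p. X p + Y p) = (\<lambda>i. A X i + A Y i)"
  unfolding linear_meas_def by blast

lemma lin_smult: "linear_meas N m A \<Longrightarrow> is_array N X \<Longrightarrow> A (\<lambda>p. c * X p) = (\<lambda>i. c * A X i)"
  unfolding linear_meas_def by blast

lemma lin_zero: "linear_meas N m A \<Longrightarrow> A (\<lambda>p. 0) = (\<lambda>i. 0)"
  using lin_smult[of N m A "\<lambda>p. 0" 0] is_array_zero by simp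

lemma lin_diff:
  assumes "linear_meas N m A" "is_array N X" "is_array N Y"
  shows "A (\<lambda>p. X p - Y p) = (\<lambda>i. A X i - A Y i)"
proof -
  have Y': "is_array N (\<lambda>p. (-1) * Y p)" using assms(3) unfolding is_array_def by simp
  have "A (\<lambda>p. X p - Y p) = A (\<lambda>p. X p + (-1) * Y p)" by simp
  also have "\<dots> = (\<lambda>i. A X i + A (\<lambda>p. (-1) * Y p) i)" using lin_add[OF assms(1,2) Y'] by simp
  also have "\<dots> = (\<lambda>i. A X i - A Y i)" using lin_smult[OF assms(1,3), of "-1"] by simp
  finally show ?thesis .
qed

lemma lin_sum:
  assumes lin: "linear_meas N m A" and fin: "finite J"
  shows "(\<forall>j\<in>J. is_array N (V j)) \<Longrightarrow> A (\<lambda>p. \<Sum>j\<in>J. V j p) = (\<lambda>i. \<Sum>j\<in>J. A (V j) i)"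
  using fin
proof (induction J rule: finite_induct)
  case empty then show ?case using lin_zero[OF lin] by simp
next
  case (insert x F)
  have "A (\<lambda>p. \<Sum>j\<in>insert x F. V j p) = A (\<lambda>p. V x p + (\<Sum>j\<in>F. V j p))"
    using insert by simp
  also have "\<dots> = (\<lambda>i. A (V x) i + A (\<lambda>p. \<Sum>j\<in>F. V j p) i)"
    using insert by (intro lin_add[OF lin]) (auto intro: is_array_sum)
  also have "\<dots> = (\<lambda>i. A (V x) i + (\<Sum>j\<in>F. A (V j) i))" using insert by simp
  finally show ?case using insert by simp
qed

definition synth :: "nat \<Rightarrow> (hidx \<Rightarrow> complex) \<Rightarrow> hidx set \<Rightarrow> arr" where
  "synth n c T = (\<lambda>p. if p \<in> grid (2^n) then (\<Sum>b\<in>T. c b * hb n b p) else 0)"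

lemma synth_array: "is_array (2^n) (synth n c T)"
  unfolding is_array_def synth_def by simp

lemma coef_grid_only: "(\<And>p. p \<in> grid (2^n) \<Longrightarrow> X p = Y p) \<Longrightarrow> coef n X a = coef n Y a"
  unfolding coef_def by (intro sum.cong) auto

lemma coef_synth_arr:
  assumes "T \<subseteq> haar_index n" "a \<in> haar_index n"
  shows "coef n (synth n c T) a = (if a \<in> T then c a else 0)"
proof -
  have "coef n (synth n c T) a = coef n (\<lambda>p. \<Sum>b\<in>T. c b * hb n b p) a"
    by (rule coef_grid_only) (simp add: synth_def)
  then show ?thesis using coef_synth[OF assms] by simp
qed

lemma ht_eq: "is_array (2^n) Z \<Longrightarrow> haar_transform n Z b = (if b \<in> haar_index n then coef n Z b else 0)"
  unfolding haar_transform_def using arr_inner_coef by simp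

lemma rip_apply:
  assumes rip: "rip_haar n m A t \<delta>" and T: "T \<subseteq> haar_index n" and card: "real (card T) \<le> t"
  shows "(1 - \<delta>) * (\<Sum>b\<in>T. (cmod (c b))^2) \<le> (vec_norm2 m (A (synth n c T)))^2
       \<and> (vec_norm2 m (A (synth n c T)))^2 \<le> (1 + \<delta>) * (\<Sum>b\<in>T. (cmod (c b))^2)"
proof -
  let ?Z = "synth n c T"
  have ht: "haar_transform n ?Z b = (if b \<in> haar_index n then (if b \<in> T then c b else 0) else 0)" for b
    using ht_eq[OF synth_array] coef_synth_arr[OF T] by simp
  have finT: "finite T" using finite_subset[OF T finite_haar_index] .
  have "{b\<in>haar_index n. haar_transform n ?Z b \<noteq> 0} \<subseteq> T" using ht by auto
  then have "card {b\<in>haar_index n. haar_transform n ?Z b \<noteq> 0} \<le> card T" using finT by (rule card_mono[rotated])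
  then have c2: "real (card {b\<in>haar_index n. haar_transform n ?Z b \<noteq> 0}) \<le> t" using card by linarith
  have cn: "(coef_norm2 n (haar_transform n ?Z))^2 = (\<Sum>b\<in>T. (cmod (c b))^2)"
  proof -
    have "(\<Sum>b\<in>haar_index n. (cmod (haar_transform n ?Z b))^2) = (\<Sum>b\<in>haar_index n. if b \<in> T then (cmod (c b))^2 else 0)"
      using ht by (intro sum.cong) auto
    also have "\<dots> = (\<Sum>b\<in>T. (cmod (c b))^2)"
    proof -
      have "haar_index n \<inter> T = T" using T by blast
      then show ?thesis by (simp add: sum.If_cases)
    qed
    finally show ?thesis unfolding coef_norm2_def by (simp add: sum_nonneg)
  qed
  show ?thesis using rip synth_array c2 unfolding rip_haar_def cn[symmetric] by blast
qed

lemma sorted_list_exists: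
  fixes f :: "'a \<Rightarrow> real"
  assumes "finite R"
  shows "\<exists>ys. distinct ys \<and> set ys = R \<and> (\<forall>i i'. i \<le> i' \<longrightarrow> i' < length ys \<longrightarrow> f (ys ! i') \<le> f (ys ! i))"
proof -
  obtain zs where zs: "set zs = R" "distinct zs" using finite_distinct_list[OF assms] by blast
  let ?ys = "sort_key (\<lambda>b. - f b) zs"
  have s: "sorted (map (\<lambda>b. - f b) ?ys)" by simp
  have "f (?ys ! i') \<le> f (?ys ! i)" if "i \<le> i'" "i' < length ?ys" for i i'
    using sorted_nth_mono[OF s, of i i'] that by simp
  then show ?thesis using zs by (intro exI[of _ ?ys]) auto
qed

lemma haar_side:
  assumes lin: "linear_meas (2^n) m A" and dl: "\<delta> < 1/3"
    and rip: "rip_haar n m A tt \<delta>" and tt: "real (t + 1) \<le> tt" and t1: "t \<ge> 1"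
    and D: "is_array (2^n) D"
  shows "arr_norm2 (2^n) D \<le> 5/2 * vec_norm2 m (A D)
            + 5/2 * ((\<Sum>b\<in>haar_index n - {None}. cmod (coef n D b)) / sqrt t)"
proof -
  define c where "c = coef n D"
  define R where "R = haar_index n - {None}"
  have finR: "finite R" unfolding R_def by simp
  obtain ys where ys: "distinct ys" "set ys = R"
    and srt: "\<And>i i'. i \<le> i' \<Longrightarrow> i' < length ys \<Longrightarrow> cmod (c (ys ! i')) \<le> cmod (c (ys ! i))"
    using sorted_list_exists[OF finR, of "\<lambda>b. cmod (c b)"] by blast
  define M where "M = length ys"
  define B where "B = (\<lambda>j. (!) ys ` ({j*t..<j*t+t} \<inter> {..<length ys}))"
  define a where "a = (\<lambda>i. if i < M then cmod (c (ys ! i)) else 0)"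
  define T0 where "T0 = insert None (B 0)"
  have BR: "B j \<subseteq> R" for j
  proof -
    have "B j \<subseteq> set ys" unfolding B_def by (rule block_decomp(4)[OF ys(1) t1])
    then show ?thesis unfolding ys(2) .
  qed
  have Bc: "card (B j) \<le> t" for j unfolding B_def by (rule block_decomp(3)[OF ys(1) t1])
  have Bsum: "(\<Sum>b\<in>B j. G b) = (\<Sum>i\<in>{j*t..<j*t+t}. if i < M then G (ys ! i) else 0)" for j and G :: "hidx \<Rightarrow> real"
    unfolding B_def M_def by (rule block_decomp(1)[OF ys(1) t1])
  have Rsum: "(\<Sum>b\<in>R. G b) = (\<Sum>j<Suc M. \<Sum>b\<in>B j. G b)" for G :: "hidx \<Rightarrow> 'b::comm_monoid_add"
    unfolding B_def M_def ys(2)[symmetric] by (rule block_decomp(2)[OF ys(1) t1])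
  have hiR: "haar_index n = insert None R" unfolding R_def haar_index_def by auto
  have NR: "None \<notin> R" unfolding R_def by simp
  have NB: "None \<notin> B j" for j using BR NR by blast
  have T0hi: "T0 \<subseteq> haar_index n" unfolding T0_def hiR using BR by blast
  have Bhi: "B j \<subseteq> haar_index n" for j unfolding hiR using BR by blast
  have finB: "finite (B j)" for j using finite_subset[OF BR finR] .
  have dec: "(\<Sum>b\<in>haar_index n. G b) = (\<Sum>b\<in>T0. G b) + (\<Sum>j<M. \<Sum>b\<in>B (Suc j). G b)" for G :: "hidx \<Rightarrow> 'b::comm_monoid_add"
  proof -
    have "(\<Sum>b\<in>haar_index n. G b) = G None + (\<Sum>b\<in>R. G b)" unfolding hiR using finR NR by simp
    also have "\<dots> = G None + ((\<Sum>b\<in>B 0. G b) + (\<Sum>j<M. \<Sum>b\<in>B (Suc j). G b))"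
      unfolding Rsum sum.lessThan_Suc_shift ..
    also have "\<dots> = (\<Sum>b\<in>T0. G b) + (\<Sum>j<M. \<Sum>b\<in>B (Suc j). G b)"
      unfolding T0_def using finB NB by (simp add: add.assoc)
    finally show ?thesis .
  qed
  define U where "U = synth n c T0"
  define V where "V = (\<lambda>j. synth n c (B (Suc j)))"
  have DUV: "D = (\<lambda>p. U p + (\<Sum>j<M. V j p))"
  proof
    fix p
    show "D p = U p + (\<Sum>j<M. V j p)"
    proof (cases "p \<in> grid (2^n)")
      case True
      have "D p = (\<Sum>b\<in>haar_index n. c b * hb n b p)" unfolding c_def by (rule synthesis[OF True])
      also have "\<dots> = U p + (\<Sum>j<M. V j p)" unfolding dec U_def V_def synth_def using True by simp
      finally show ?thesis .
    next
      case False
      then show ?thesis using D unfolding is_array_def U_def V_def synth_def by (cases p) auto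
    qed
  qed
  have AD: "A D = (\<lambda>i. A U i + (\<Sum>j<M. A (V j) i))"
  proof -
    have "A D = (\<lambda>i. A U i + A (\<lambda>p. \<Sum>j<M. V j p) i)"
      unfolding DUV U_def V_def
      by (rule lin_add[OF lin synth_array is_array_sum[OF synth_array]])
    also have "A (\<lambda>p. \<Sum>j<M. V j p) = (\<lambda>i. \<Sum>j<M. A (V j) i)"
      unfolding V_def by (rule lin_sum[OF lin]) (auto simp: synth_array)
    finally show ?thesis by simp
  qed
  define nT where "nT = sqrt (\<Sum>b\<in>T0. (cmod (c b))^2)"
  define nB where "nB = (\<lambda>j. sqrt (\<Sum>b\<in>B (Suc j). (cmod (c b))^2))"
  define \<tau> where "\<tau> = (\<Sum>j<M. nB j)"
  have cT0: "real (card T0) \<le> tt"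
  proof -
    have "card T0 \<le> card (B 0) + 1" unfolding T0_def using finB by (simp add: card_insert_if)
    then have "card T0 \<le> t + 1" using Bc[of 0] by linarith
    then show ?thesis using tt by linarith
  qed
  have cB: "real (card (B (Suc j))) \<le> tt" for j using Bc[of "Suc j"] tt by linarith
  have lowU: "4/5 * nT \<le> vec_norm2 m (A U)"
  proof -
    have "(1 - \<delta>) * (\<Sum>b\<in>T0. (cmod (c b))^2) \<le> (vec_norm2 m (A U))^2"
      using rip_apply[OF rip T0hi cT0] unfolding U_def by blast
    moreover have "(4/5 * nT)^2 \<le> (1 - \<delta>) * (\<Sum>b\<in>T0. (cmod (c b))^2)"
    proof -
      have Snn: "(\<Sum>b\<in>T0. (cmod (c b))^2) \<ge> 0" by (simp add: sum_nonneg)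
      have "(4/5 * nT)^2 = (4/5)^2 * nT^2" by (rule power_mult_distrib)
      also have "nT^2 = (\<Sum>b\<in>T0. (cmod (c b))^2)" unfolding nT_def using Snn by simp
      finally have "(4/5 * nT)^2 = 16/25 * (\<Sum>b\<in>T0. (cmod (c b))^2)" by (simp add: power2_eq_square)
      also have "\<dots> \<le> (1 - \<delta>) * (\<Sum>b\<in>T0. (cmod (c b))^2)"
        using dl by (intro mult_right_mono) (auto simp: sum_nonneg)
      finally show ?thesis .
    qed
    ultimately have "(4/5 * nT)^2 \<le> (vec_norm2 m (A U))^2" by linarith
    then show ?thesis using vec_norm2_nonneg by (rule power2_le_imp_le)
  qed
  have upV: "vec_norm2 m (A (V j)) \<le> 6/5 * nB j" for j
  proof -
    have "(vec_norm2 m (A (V j)))^2 \<le> (1 + \<delta>) * (\<Sum>b\<in>B (Suc j). (cmod (c b))^2)"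
      using rip_apply[OF rip Bhi cB] unfolding V_def by blast
    also have "\<dots> \<le> (6/5 * nB j)^2"
    proof -
      have "(1 + \<delta>) * (\<Sum>b\<in>B (Suc j). (cmod (c b))^2) \<le> 36/25 * (\<Sum>b\<in>B (Suc j). (cmod (c b))^2)"
        using dl by (intro mult_right_mono) (auto simp: sum_nonneg)
      also have "\<dots> = (6/5 * nB j)^2"
      proof -
        have Snn: "(\<Sum>b\<in>B (Suc j). (cmod (c b))^2) \<ge> 0" by (simp add: sum_nonneg)
        have "(6/5 * nB j)^2 = (6/5)^2 * (nB j)^2" by (rule power_mult_distrib)
        also have "(nB j)^2 = (\<Sum>b\<in>B (Suc j). (cmod (c b))^2)" unfolding nB_def using Snn by simp
        finally show ?thesis by (simp add: power2_eq_square)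
      qed
      finally show ?thesis .
    qed
    finally have "(vec_norm2 m (A (V j)))^2 \<le> (6/5 * nB j)^2" .
    moreover have "0 \<le> 6/5 * nB j" unfolding nB_def by (simp add: sum_nonneg)
    ultimately show ?thesis by (rule power2_le_imp_le)
  qed
  have "vec_norm2 m (A U) \<le> vec_norm2 m (A D) + (\<Sum>j<M. vec_norm2 m (A (V j)))"
  proof -
    have "A U = (\<lambda>i. A D i + (- (\<Sum>j<M. A (V j) i)))" unfolding AD by simp
    then have "vec_norm2 m (A U) \<le> vec_norm2 m (A D) + vec_norm2 m (\<lambda>i. - (\<Sum>j<M. A (V j) i))"
      using vec_tri[of m "A D" "\<lambda>i. - (\<Sum>j<M. A (V j) i)"] by simp
    also have "\<dots> = vec_norm2 m (A D) + vec_norm2 m (\<lambda>i. \<Sum>j<M. A (V j) i)"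
      using vec_minus[of m "\<lambda>i. \<Sum>j<M. A (V j) i"] by simp
    also have "\<dots> \<le> vec_norm2 m (A D) + (\<Sum>j<M. vec_norm2 m (A (V j)))"
      using vec_sum[of "{..<M}" m "\<lambda>j. A (V j)"] by simp
    finally show ?thesis .
  qed
  also have "\<dots> \<le> vec_norm2 m (A D) + 6/5 * \<tau>"
    unfolding \<tau>_def sum_distrib_left using upV by (intro add_left_mono sum_mono) auto
  finally have step1: "4/5 * nT \<le> vec_norm2 m (A D) + 6/5 * \<tau>" using lowU by linarith
  have tau_nn: "\<tau> \<ge> 0" unfolding \<tau>_def nB_def by (simp add: sum_nonneg)
  have nT_nn: "nT \<ge> 0" unfolding nT_def by (simp add: sum_nonneg)
  have normD: "arr_norm2 (2^n) D \<le> nT + \<tau>"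
  proof -
    have "(arr_norm2 (2^n) D)^2 = (\<Sum>b\<in>haar_index n. (cmod (c b))^2)"
      unfolding arr_norm2_def c_def parseval by (simp add: sum_nonneg)
    also have "\<dots> = nT^2 + (\<Sum>j<M. (nB j)^2)"
      unfolding dec nT_def nB_def by (simp add: sum_nonneg)
    also have "(\<Sum>j<M. (nB j)^2) \<le> \<tau>^2"
    proof -
      have "L2_set nB {..<M} \<le> \<tau>" unfolding \<tau>_def by (rule L2_set_le_sum) (simp add: nB_def sum_nonneg)
      then have "(L2_set nB {..<M})^2 \<le> \<tau>^2" by (intro power_mono) (auto simp: L2_set_nonneg)
      moreover have "(L2_set nB {..<M})^2 = (\<Sum>j<M. (nB j)^2)"
        unfolding L2_set_def by (simp add: sum_nonneg)
      ultimately show ?thesis by simp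
    qed
    finally have "(arr_norm2 (2^n) D)^2 \<le> nT^2 + \<tau>^2" by simp
    also have "\<dots> \<le> (nT + \<tau>)^2" using tau_nn nT_nn by (simp add: power2_eq_square algebra_simps)
    finally have "(arr_norm2 (2^n) D)^2 \<le> (nT + \<tau>)^2" .
    moreover have "0 \<le> nT + \<tau>" using tau_nn nT_nn by simp
    ultimately show ?thesis by (rule power2_le_imp_le)
  qed
  have tau_bound: "\<tau> \<le> (\<Sum>b\<in>R. cmod (c b)) / sqrt t"
  proof -
    have a_nn: "\<And>i. a i \<ge> 0" unfolding a_def by simp
    have a_mono: "\<And>q i. q \<le> i \<Longrightarrow> a i \<le> a q" unfolding a_def M_def using srt by auto
    have nBa: "nB j = sqrt (\<Sum>i\<in>{Suc j*t..<Suc j*t+t}. (a i)^2)" for j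
      unfolding nB_def Bsum a_def by (intro arg_cong[where f=sqrt] sum.cong) auto
    have "\<tau> \<le> (\<Sum>i<M*t. a i) / sqrt t"
      unfolding \<tau>_def nBa by (rule seq_blocks[OF a_nn a_mono t1])
    also have "(\<Sum>i<M*t. a i) \<le> (\<Sum>i<Suc M*t. a i)"
      using a_nn by (intro sum_mono2) auto
    also have "(\<Sum>i<Suc M*t. a i) = (\<Sum>b\<in>R. cmod (c b))"
    proof -
      have "(\<Sum>i<Suc M*t. a i) = (\<Sum>j<Suc M. \<Sum>x<t. a (j*t+x))" by (rule blocksum)
      also have "\<dots> = (\<Sum>j<Suc M. \<Sum>b\<in>B j. cmod (c b))"
        unfolding Bsum shift_ivl a_def ..
      also have "\<dots> = (\<Sum>b\<in>R. cmod (c b))" unfolding Rsum ..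
      finally show ?thesis .
    qed
    finally show ?thesis by (simp add: divide_right_mono)
  qed
  have "arr_norm2 (2^n) D \<le> 5/2 * vec_norm2 m (A D) + 5/2 * \<tau>"
    using step1 normD vec_norm2_nonneg[of m "A D"] by linarith
  also have "\<dots> \<le> 5/2 * vec_norm2 m (A D) + 5/2 * ((\<Sum>b\<in>R. cmod (c b)) / sqrt t)"
    using tau_bound by linarith
  finally show ?thesis unfolding R_def c_def .
qed

lemma tail_obtain:
  "\<exists>S. S \<subseteq> grad_index N \<and> card S \<le> s \<and>
     grad_tail N s X = (\<Sum>q\<in>grad_index N - S. cmod (grad N X q))"
proof -
  let ?Ss = "{S. S \<subseteq> grad_index N \<and> card S \<le> s}"
  let ?f = "\<lambda>S. \<Sum>q\<in>grad_index N - S. cmod (grad N X q)"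
  have fin: "finite ?Ss"
    by (rule finite_subset[of _ "Pow (grad_index N)"]) (auto simp: grad_index_def)
  have ne: "?f ` ?Ss \<noteq> {}" by auto
  have "grad_tail N s X \<in> ?f ` ?Ss" unfolding grad_tail_def using fin ne by (intro Min_in) auto
  then show ?thesis by auto
qed

lemma ln_cube_bound:
  assumes n: "n \<ge> 1" and s: "s \<ge> 1"
  shows "real (16384 * s * n^2 + 1) \<le> 131072 * real s * (ln (2^n))^3"
proof -
  have l: "ln ((2::real)^n) = real n * ln 2" by (simp add: ln_realpow)
  have "2/3 * real n \<le> ln 2 * real n" using mult_right_mono[OF ln2_ge_two_thirds, of "real n"] by simp
  then have "2/3 * real n \<le> real n * ln 2" by (simp add: mult.commute)
  then have "(2/3 * real n)^3 \<le> (ln ((2::real)^n))^3" unfolding l by (intro power_mono) auto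
  moreover have e: "(2/3 * real n)^3 = 8/27 * real n^3" by (simp add: power3_eq_cube field_simps)
  ultimately have c: "8/27 * real n^3 \<le> (ln ((2::real)^n))^3" by linarith
  have n2: "real n^2 \<le> real n^3" using n by (simp add: power_increasing)
  have n1: "1 \<le> real n^2" using n by simp
  have s1: "1 \<le> real s" using s by simp
  have "1 * 1 \<le> real s * real n^2" using n1 s1 by (intro mult_mono) auto
  then have sn: "1 \<le> real s * real n^2" by simp
  have "real (16384 * s * n^2 + 1) = 16384 * (real s * real n^2) + 1" by simp
  also have "\<dots> \<le> 131072 * 8/27 * (real s * real n^2)" using sn by simp
  also have "\<dots> \<le> 131072 * 8/27 * (real s * real n^3)" using n2 s by (intro mult_left_mono) auto
  also have "\<dots> = 131072 * real s * (8/27 * real n^3)" by simp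
  also have "\<dots> \<le> 131072 * real s * (ln (2^n))^3" using c by (intro mult_left_mono) auto
  finally show ?thesis .
qed

theorem theorem5:
  "\<exists>C>0. \<exists>C'>0. \<forall>(n::nat) (s::nat) (m::nat) (A :: arr \<Rightarrow> (nat \<Rightarrow> complex)) (\<delta>::real)
      (X::arr) (\<xi>::nat \<Rightarrow> complex) (\<epsilon>::real) (Xh::arr).
     n \<ge> 1 \<longrightarrow> s \<ge> 1 \<longrightarrow>
     linear_meas (2^n) m A \<longrightarrow>
     \<delta> < 1/3 \<longrightarrow>
     rip_haar n m A (C * real s * (ln (2^n))^3) \<delta> \<longrightarrow>
     is_array (2^n) X \<longrightarrow>
     (\<forall>i. i \<ge> m \<longrightarrow> \<xi> i = 0) \<longrightarrow>
     vec_norm2 m \<xi> \<le> \<epsilon> \<longrightarrow>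
     (let y = (\<lambda>i. A X i + \<xi> i) in
       is_array (2^n) Xh \<and> vec_norm2 m (\<lambda>i. A Xh i - y i) \<le> \<epsilon> \<and>
       (\<forall>Z. is_array (2^n) Z \<longrightarrow> vec_norm2 m (\<lambda>i. A Z i - y i) \<le> \<epsilon> \<longrightarrow>
            tv_norm (2^n) Xh \<le> tv_norm (2^n) Z)
       \<longrightarrow> arr_norm2 (2^n) (\<lambda>p. X p - Xh p)
             \<le> C' * (grad_tail (2^n) s X / sqrt (real s) + \<epsilon>))"
proof (rule exI[of _ "131072::real"], rule conjI, simp, rule exI[of _ "8::real"], rule conjI, simp, intro allI impI, unfold Let_def, intro impI)
  fix n s m :: nat and A :: "arr \<Rightarrow> (nat \<Rightarrow> complex)" and \<delta> :: real and X :: arr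
    and \<xi> :: "nat \<Rightarrow> complex" and \<epsilon> :: real and Xh :: arr
  assume n: "n \<ge> 1" and s: "s \<ge> 1" and lin: "linear_meas (2^n) m A" and dl: "\<delta> < 1/3"
    and rip: "rip_haar n m A (131072 * real s * (ln (2^n))^3) \<delta>"
    and X: "is_array (2^n) X" and \<xi>m: "\<forall>i. i \<ge> m \<longrightarrow> \<xi> i = 0" and \<xi>e: "vec_norm2 m \<xi> \<le> \<epsilon>"
  define y where "y = (\<lambda>i. A X i + \<xi> i)"
  assume H: "is_array (2^n) Xh \<and> vec_norm2 m (\<lambda>i. A Xh i - (A X i + \<xi> i)) \<le> \<epsilon> \<and>
       (\<forall>Z. is_array (2^n) Z \<longrightarrow> vec_norm2 m (\<lambda>i. A Z i - (A X i + \<xi> i)) \<le> \<epsilon> \<longrightarrow>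
            tv_norm (2^n) Xh \<le> tv_norm (2^n) Z)"
  have Xh: "is_array (2^n) Xh" and Xhe: "vec_norm2 m (\<lambda>i. A Xh i - y i) \<le> \<epsilon>"
    and mini: "\<And>Z. is_array (2^n) Z \<Longrightarrow> vec_norm2 m (\<lambda>i. A Z i - y i) \<le> \<epsilon> \<Longrightarrow> tv_norm (2^n) Xh \<le> tv_norm (2^n) Z"
    using H unfolding y_def by blast+
  define D where "D = (\<lambda>p. X p - Xh p)"
  have Darr: "is_array (2^n) D" unfolding D_def using X Xh by (rule is_array_diff)
  define t where "t = 16384 * s * n^2"
  have t1: "t \<ge> 1" unfolding t_def using n s by (simp add: Suc_le_eq)
  have tt: "real (t + 1) \<le> 131072 * real s * (ln (2^n))^3" unfolding t_def by (rule ln_cube_bound[OF n s])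
  define nD where "nD = arr_norm2 (2^n) D"
  define \<Lambda> where "\<Lambda> = (\<Sum>b\<in>haar_index n - {None}. cmod (coef n D b))"
  have main: "nD \<le> 5/2 * vec_norm2 m (A D) + 5/2 * (\<Lambda> / sqrt t)"
    unfolding nD_def \<Lambda>_def by (rule haar_side[OF lin dl rip tt t1 Darr])
  have eps_nn: "\<epsilon> \<ge> 0" using \<xi>e vec_norm2_nonneg[of m \<xi>] by linarith
  have AX: "vec_norm2 m (\<lambda>i. A X i - y i) \<le> \<epsilon>"
    unfolding y_def using \<xi>e vec_minus[of m \<xi>] by simp
  have AD: "vec_norm2 m (A D) \<le> 2 * \<epsilon>"
  proof -
    have "A D = (\<lambda>i. (A X i - y i) + (- (A Xh i - y i)))"
      unfolding D_def lin_diff[OF lin X Xh] by simp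
    then have "vec_norm2 m (A D) \<le> vec_norm2 m (\<lambda>i. A X i - y i) + vec_norm2 m (\<lambda>i. - (A Xh i - y i))"
      using vec_tri[of m "\<lambda>i. A X i - y i" "\<lambda>i. - (A Xh i - y i)"] by simp
    also have "\<dots> \<le> \<epsilon> + \<epsilon>" using AX Xhe vec_minus[of m "\<lambda>i. A Xh i - y i"] by simp
    finally show ?thesis by simp
  qed
  have tvle: "tv_norm (2^n) Xh \<le> tv_norm (2^n) X" using mini[OF X AX] .
  obtain S where S: "S \<subseteq> grad_index (2^n)" "card S \<le> s"
    and \<sigma>: "grad_tail (2^n) s X = (\<Sum>q\<in>grad_index (2^n) - S. cmod (grad (2^n) X q))"
    using tail_obtain by blast
  define \<sigma> where "\<sigma> = grad_tail (2^n) s X"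
  have \<sigma>_nn: "\<sigma> \<ge> 0" unfolding \<sigma>_def \<sigma> by (simp add: sum_nonneg)
  have cone': "tv_norm (2^n) D \<le> 2 * (\<Sum>q\<in>S. cmod (grad (2^n) D q)) + 2 * \<sigma>"
    using cone[OF S(1) tvle] unfolding D_def \<sigma>_def \<sigma> .
  define q where "q = sqrt (real s)"
  have qpos: "q > 0" unfolding q_def using s by simp
  have nD_nn: "nD \<ge> 0" unfolding nD_def arr_norm2_def by (simp add: sum_nonneg)
  have CS: "(\<Sum>q\<in>S. cmod (grad (2^n) D q)) \<le> 3 * q * nD"
  proof -
    have fin: "finite (grad_index (2^n))" unfolding grad_index_def by simp
    have "(\<Sum>q\<in>S. cmod (grad (2^n) D q)) \<le> sqrt (real (card S)) * sqrt (\<Sum>q\<in>grad_index (2^n). (cmod (grad (2^n) D q))^2)"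
      by (rule cs_sum[OF fin S(1)]) simp
    also have "\<dots> \<le> q * sqrt (8 * nD^2)"
    proof (intro mult_mono)
      show "sqrt (real (card S)) \<le> q" unfolding q_def using S(2) by simp
      have "nD^2 = (\<Sum>p\<in>grid (2^n). (cmod (D p))^2)" unfolding nD_def arr_norm2_def by (simp add: sum_nonneg)
      then show "sqrt (\<Sum>q\<in>grad_index (2^n). (cmod (grad (2^n) D q))^2) \<le> sqrt (8 * nD^2)"
        using grad_l2[OF Darr] by simp
    qed (auto simp: qpos less_imp_le sum_nonneg)
    also have "\<dots> \<le> q * (3 * nD)"
    proof -
      have "sqrt (8 * nD^2) = sqrt 8 * nD" using nD_nn by (simp add: real_sqrt_mult)
      also have "\<dots> \<le> 3 * nD"
      proof -
        have "(sqrt 8)^2 \<le> (3::real)^2" by simp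
        then have "sqrt 8 \<le> 3" by (rule power2_le_imp_le) simp
        then show ?thesis using nD_nn by (intro mult_right_mono) auto
      qed
      finally show ?thesis using qpos by (intro mult_left_mono) auto
    qed
    finally show ?thesis by simp
  qed
  have Lam: "\<Lambda> \<le> 3 * real n * (6 * q * nD + 2 * \<sigma>)"
  proof -
    have "\<Lambda> \<le> 3 * real n * tv_norm (2^n) D" unfolding \<Lambda>_def by (rule l1_bound)
    also have "\<dots> \<le> 3 * real n * (6 * q * nD + 2 * \<sigma>)"
      using cone' CS by (intro mult_left_mono) auto
    finally show ?thesis .
  qed
  have sqt: "sqrt (real t) = 128 * real n * q"
  proof -
    have "real t = (128 * real n)^2 * real s" unfolding t_def by (simp add: power_mult_distrib)
    then show ?thesis unfolding q_def by (simp add: real_sqrt_mult)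
  qed
  have npos: "real n > 0" using n by simp
  have r: "\<Lambda> / sqrt t \<le> 18/128 * nD + 6/128 * (\<sigma> / q)"
  proof -
    have "\<Lambda> / sqrt t \<le> 3 * real n * (6 * q * nD + 2 * \<sigma>) / (128 * real n * q)"
      unfolding sqt using Lam npos qpos by (intro divide_right_mono) auto
    also have "\<dots> = 18/128 * nD + 6/128 * (\<sigma> / q)"
      using npos qpos by (simp add: field_simps)
    finally show ?thesis .
  qed
  have "nD \<le> 5 * \<epsilon> + 45/128 * nD + 15/128 * (\<sigma> / q)"
    using main AD r by linarith
  moreover have "\<sigma> / q \<ge> 0" using \<sigma>_nn qpos by simp
  ultimately have "nD \<le> 8 * (\<sigma> / q) + 8 * \<epsilon>"
    using eps_nn by linarith
  then have "nD \<le> 8 * (\<sigma> / q + \<epsilon>)" by (simp add: distrib_left)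
  then show "arr_norm2 (2^n) (\<lambda>p. X p - Xh p) \<le> 8 * (grad_tail (2^n) s X / sqrt (real s) + \<epsilon>)"
    unfolding nD_def D_def \<sigma>_def q_def .
qed

end
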